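(* Let $(M^4,g)$ be a Riemannian manifold with an almost Hermitian structure $J$, a skew-symmetric endomorphism field $A$ and a vector field $\eta$ with $0<\rho:=|\eta|<1/2$; set $f:=\sqrt{1-4\rho^2}$ and $C(X,Y):=(\nabla_XA)(Y)-(\nabla_YA)(X)$. Assume $$(\nabla_YJ)(X)=\frac4{f-1}\,X\lrcorner\big(J\eta\wedge AY+\eta\wedge JAY\big)\quad\text{and}\quad\nabla_X\eta=fAX$$ for all $X,Y$. Then for all $X,Y$: \begin{align*} &g(C(X,Y),\eta)=0,\\ &R(X,Y)\eta=fC(X,Y)-4\,\eta\lrcorner(AX\wedge AY),\\ &R(X,Y)J\eta=-JC(X,Y)+\frac4{f-1}\,g(C(X,Y),J\eta)\,\eta-4\,J\eta\lrcorner(AX\wedge AY). \end{align*}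
   Context: $R(X,Y)=[\nabla_X,\nabla_Y]-\nabla_{[X,Y]}$. An almost Hermitian structure is a $g$-orthogonal almost complex structure. For vectors $X,a,b$, $X\lrcorner(a\wedge b)=g(X,a)b-g(X,b)a$. *)

theory Defs
  imports "HOL-Analysis.Analysis"
begin

text \<open>Local model: the manifold is (a chart) an open set U of a 4-dimensional
Euclidean space 'a; the Riemannian metric is a smooth field of inner products
g p :: 'a => 'a => real, p in U.\<close>

definition dderiv :: "'a::euclidean_space \<Rightarrow> ('a \<Rightarrow> 'b::real_normed_vector) \<Rightarrow> ('a \<Rightarrow> 'b)" where
  "dderiv v F = (\<lambda>p. frechet_derivative F (at p) v)"

definition smooth_on :: "'a::euclidean_space set \<Rightarrow> ('a \<Rightarrow> 'b::real_normed_vector) \<Rightarrow> bool" where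
  "smooth_on U F \<longleftrightarrow> (\<forall>vs. fold dderiv vs F differentiable_on U)"

definition riemannian_metric :: "'a::euclidean_space set \<Rightarrow> ('a \<Rightarrow> 'a \<Rightarrow> 'a \<Rightarrow> real) \<Rightarrow> bool" where
  "riemannian_metric U g \<longleftrightarrow>
     (\<forall>p\<in>U. bilinear (g p) \<and> (\<forall>u v. g p u v = g p v u) \<and> (\<forall>u. u \<noteq> 0 \<longrightarrow> g p u u > 0))
     \<and> (\<forall>u v. smooth_on U (\<lambda>p. g p u v))"

definition smooth_vf :: "'a::euclidean_space set \<Rightarrow> ('a \<Rightarrow> 'a) \<Rightarrow> bool" where
  "smooth_vf U X \<longleftrightarrow> smooth_on U X"

definition smooth_endo :: "'a::euclidean_space set \<Rightarrow> ('a \<Rightarrow> 'a \<Rightarrow> 'a) \<Rightarrow> bool" where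
  "smooth_endo U A \<longleftrightarrow> (\<forall>p\<in>U. linear (A p)) \<and> (\<forall>v. smooth_on U (\<lambda>p. A p v))"

text \<open>Koszul formula in coordinates: 2 g(Gamma(u,v),z) = du g(v,z) + dv g(u,z) - dz g(u,v).\<close>
definition christoffel :: "('a::euclidean_space \<Rightarrow> 'a \<Rightarrow> 'a \<Rightarrow> real) \<Rightarrow> 'a \<Rightarrow> 'a \<Rightarrow> 'a \<Rightarrow> 'a" where
  "christoffel g p u v = (THE w. \<forall>z. g p w z =
      (dderiv u (\<lambda>q. g q v z) p + dderiv v (\<lambda>q. g q u z) p - dderiv z (\<lambda>q. g q u v) p) / 2)"

definition nabla :: "('a::euclidean_space \<Rightarrow> 'a \<Rightarrow> 'a \<Rightarrow> real) \<Rightarrow> ('a \<Rightarrow> 'a) \<Rightarrow> ('a \<Rightarrow> 'a) \<Rightarrow> ('a \<Rightarrow> 'a)" where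
  "nabla g X Y = (\<lambda>p. frechet_derivative Y (at p) (X p) + christoffel g p (X p) (Y p))"

definition lie :: "('a::euclidean_space \<Rightarrow> 'a) \<Rightarrow> ('a \<Rightarrow> 'a) \<Rightarrow> ('a \<Rightarrow> 'a)" where
  "lie X Y = (\<lambda>p. frechet_derivative Y (at p) (X p) - frechet_derivative X (at p) (Y p))"

definition curv :: "('a::euclidean_space \<Rightarrow> 'a \<Rightarrow> 'a \<Rightarrow> real) \<Rightarrow> ('a \<Rightarrow> 'a) \<Rightarrow> ('a \<Rightarrow> 'a) \<Rightarrow> ('a \<Rightarrow> 'a) \<Rightarrow> ('a \<Rightarrow> 'a)" where
  "curv g X Y Z = (\<lambda>p. nabla g X (nabla g Y Z) p - nabla g Y (nabla g X Z) p - nabla g (lie X Y) Z p)"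

definition app :: "('a \<Rightarrow> 'a \<Rightarrow> 'a) \<Rightarrow> ('a \<Rightarrow> 'a) \<Rightarrow> ('a \<Rightarrow> 'a)" where
  "app A Y = (\<lambda>p. A p (Y p))"

definition nabla_endo :: "('a::euclidean_space \<Rightarrow> 'a \<Rightarrow> 'a \<Rightarrow> real) \<Rightarrow> ('a \<Rightarrow> 'a) \<Rightarrow> ('a \<Rightarrow> 'a \<Rightarrow> 'a) \<Rightarrow> ('a \<Rightarrow> 'a) \<Rightarrow> ('a \<Rightarrow> 'a)" where
  "nabla_endo g X A Y = (\<lambda>p. nabla g X (app A Y) p - A p (nabla g X Y p))"

text \<open>Interior product X _| (a /\ b) = g(X,a) b - g(X,b) a at a point.\<close>
definition contr :: "('a::real_vector \<Rightarrow> 'a \<Rightarrow> real) \<Rightarrow> 'a \<Rightarrow> 'a \<Rightarrow> 'a \<Rightarrow> 'a" where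
  "contr gp x a b = gp x a *\<^sub>R b - gp x b *\<^sub>R a"

end

theory Submission
  imports Defs
begin


fun nsm :: "nat \<Rightarrow> 'a::euclidean_space set \<Rightarrow> ('a \<Rightarrow> 'b::real_normed_vector) \<Rightarrow> bool" where
  "nsm 0 U F = (F differentiable_on U)"
| "nsm (Suc n) U F = (F differentiable_on U \<and> (\<forall>v. nsm n U (dderiv v F)))"

lemma nsm_fold: "nsm n U F \<longleftrightarrow> (\<forall>vs. length vs \<le> n \<longrightarrow> fold dderiv vs F differentiable_on U)"
proof (induction n arbitrary: F)
  case 0
  then show ?case by simp
next
  case (Suc n)
  show ?case
  proof
    assume h: "nsm (Suc n) U F"
    show "\<forall>vs. length vs \<le> Suc n \<longrightarrow> fold dderiv vs F differentiable_on U"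
    proof (intro allI impI)
      fix vs :: "'a list" assume "length vs \<le> Suc n"
      then show "fold dderiv vs F differentiable_on U"
        using h Suc.IH by (cases vs) auto
    qed
  next
    assume h: "\<forall>vs. length vs \<le> Suc n \<longrightarrow> fold dderiv vs F differentiable_on U"
    have "F differentiable_on U" using h[rule_format, of "[]"] by simp
    moreover have "nsm n U (dderiv v F)" for v
      unfolding Suc.IH
    proof (intro allI impI)
      fix vs :: "'a list" assume "length vs \<le> n"
      then show "fold dderiv vs (dderiv v F) differentiable_on U"
        using h[rule_format, of "v # vs"] by simp
    qed
    ultimately show "nsm (Suc n) U F" by simp
  qed
qed

lemma smooth_on_nsm: "smooth_on U F \<longleftrightarrow> (\<forall>n. nsm n U F)"
  unfolding smooth_on_def nsm_fold by (metis le_refl)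

lemma nsm_mono: "nsm (Suc n) U F \<Longrightarrow> nsm n U F"
  by (induction n arbitrary: F) auto

lemma nsm_diff: "nsm n U F \<Longrightarrow> F differentiable_on U"
  by (cases n) auto

lemma smooth_dderiv: "smooth_on U F \<Longrightarrow> smooth_on U (dderiv v F)"
  unfolding smooth_on_nsm by (metis nsm.simps(2))

lemma smooth_diff_at: "smooth_on U F \<Longrightarrow> open U \<Longrightarrow> p \<in> U \<Longrightarrow> F differentiable (at p)"
  unfolding smooth_on_nsm
  by (metis nsm.simps(1) differentiable_on_eq_differentiable_at)

lemma dderiv_cong:
  assumes "open U" "\<forall>q\<in>U. F q = G q" "p \<in> U"
  shows "dderiv v F p = dderiv v G p"
proof -
  have "(F has_derivative D) (at p) \<longleftrightarrow> (G has_derivative D) (at p)" for D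
    using has_derivative_transform_within_open[of F D p UNIV U G]
          has_derivative_transform_within_open[of G D p UNIV U F] assms by auto
  then show ?thesis unfolding dderiv_def frechet_derivative_def by simp
qed

lemma diff_on_cong:
  assumes "open U" "\<forall>q\<in>U. F q = G q" "F differentiable_on U"
  shows "G differentiable_on U"
  using assms has_derivative_transform_within_open[of F _ _ UNIV U G]
  unfolding differentiable_on_eq_differentiable_at[OF assms(1)] differentiable_def by metis

lemma nsm_cong:
  assumes "open U" "\<forall>q\<in>U. F q = G q" "nsm n U F"
  shows "nsm n U G"
  using assms(2,3)
proof (induction n arbitrary: F G)
  case 0
  then show ?case using diff_on_cong[OF assms(1)] by auto
next
  case (Suc n)
  have "\<forall>q\<in>U. dderiv v F q = dderiv v G q" for v using dderiv_cong[OF assms(1) Suc.prems(1)] by auto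
  then show ?case using Suc diff_on_cong[OF assms(1)] by (metis nsm.simps(2))
qed

lemma dderiv_eq: "(F has_derivative D) (at p) \<Longrightarrow> dderiv v F p = D v"
  unfolding dderiv_def using frechet_derivative_at by metis

lemma linear_basis_expand: "linear L \<Longrightarrow> L x = (\<Sum>b\<in>Basis. (x \<bullet> b) *\<^sub>R L b)"
proof -
  assume L: "linear L"
  have "L x = L (\<Sum>b\<in>Basis. (x \<bullet> b) *\<^sub>R b)" by (simp add: euclidean_representation)
  also have "\<dots> = (\<Sum>b\<in>Basis. (x \<bullet> b) *\<^sub>R L b)"
    using L by (simp add: linear_sum linear_scale)
  finally show ?thesis .
qed

lemma nsm_add:
  assumes U: "open U"
  shows "nsm n U F \<Longrightarrow> nsm n U G \<Longrightarrow> nsm n U (\<lambda>q. F q + G q)"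
proof (induction n arbitrary: F G)
  case 0
  then show ?case by (simp add: differentiable_on_add)
next
  case (Suc n)
  have eq: "\<forall>q\<in>U. dderiv v F q + dderiv v G q = dderiv v (\<lambda>q. F q + G q) q" for v
  proof
    fix q assume q: "q \<in> U"
    have "F differentiable at q" "G differentiable at q"
      using Suc.prems q U by (auto simp: differentiable_on_eq_differentiable_at)
    from has_derivative_add[OF this[unfolded frechet_derivative_works]]
    show "dderiv v F q + dderiv v G q = dderiv v (\<lambda>q. F q + G q) q"
      using dderiv_eq unfolding dderiv_def by metis
  qed
  have "nsm n U (dderiv v F)" "nsm n U (dderiv v G)" for v using Suc.prems by auto
  then have "nsm n U (\<lambda>q. dderiv v F q + dderiv v G q)" for v
    using Suc.IH by blast
  then have "nsm n U (dderiv v (\<lambda>q. F q + G q))" for v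
    using nsm_cong[OF U eq] by blast
  then show ?case using Suc.prems by (simp add: differentiable_on_add)
qed

lemma nsm_const: fixes c :: "'b::real_normed_vector" and U :: "'a::euclidean_space set"
  shows "nsm n U (\<lambda>q. c)"
proof (induction n arbitrary: c)
  case 0
  then show ?case by simp
next
  case (Suc n)
  have "dderiv v (\<lambda>q::'a. c) = (\<lambda>q. 0)" for v by (simp add: dderiv_def)
  then show ?case using Suc by simp
qed

lemma bilinear_diff_at:
  assumes bb: "bounded_bilinear pr" and "F differentiable at q" "G differentiable at q"
  shows "((\<lambda>q. pr (F q) (G q)) has_derivative
       (\<lambda>h. pr (F q) (frechet_derivative G (at q) h) + pr (frechet_derivative F (at q) h) (G q))) (at q)"
  using bounded_bilinear.FDERIV[OF bb frechet_derivative_works[THEN iffD1, OF assms(2)] frechet_derivative_works[THEN iffD1, OF assms(3)]]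
  by simp

lemma nsm_bilinear:
  assumes U: "open U" and bb: "bounded_bilinear pr"
  shows "nsm n U F \<Longrightarrow> nsm n U G \<Longrightarrow> nsm n U (\<lambda>q. pr (F q) (G q))"
proof (induction n arbitrary: F G)
  case 0
  have "(\<lambda>q. pr (F q) (G q)) differentiable at q" if "q \<in> U" for q
  proof -
    have "F differentiable at q" "G differentiable at q"
      using 0 that U by (auto simp: differentiable_on_eq_differentiable_at)
    then show ?thesis using bilinear_diff_at[OF bb] unfolding differentiable_def by blast
  qed
  then show ?case by (simp add: differentiable_on_eq_differentiable_at[OF U])
next
  case (Suc n)
  have dF: "F differentiable_on U" and dG: "G differentiable_on U" using Suc.prems by auto
  have eq: "\<forall>q\<in>U. pr (F q) (dderiv v G q) + pr (dderiv v F q) (G q) = dderiv v (\<lambda>q. pr (F q) (G q)) q" for v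
  proof
    fix q assume q: "q \<in> U"
    have "F differentiable at q" "G differentiable at q"
      using dF dG q U by (auto simp: differentiable_on_eq_differentiable_at)
    from bilinear_diff_at[OF bb this]
    show "pr (F q) (dderiv v G q) + pr (dderiv v F q) (G q) = dderiv v (\<lambda>q. pr (F q) (G q)) q"
      using dderiv_eq unfolding dderiv_def by metis
  qed
  have nF: "nsm n U F" and nG: "nsm n U G" using Suc.prems nsm_mono by blast+
  have dFn: "nsm n U (dderiv v F)" and dGn: "nsm n U (dderiv v G)" for v using Suc.prems by auto
  have "nsm n U (\<lambda>q. pr (F q) (dderiv v G q) + pr (dderiv v F q) (G q))" for v
    by (rule nsm_add[OF U Suc.IH[OF nF dGn] Suc.IH[OF dFn nG]])
  then have "nsm n U (dderiv v (\<lambda>q. pr (F q) (G q)))" for v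
    using nsm_cong[OF U eq] by blast
  moreover have "(\<lambda>q. pr (F q) (G q)) differentiable_on U"
    using nsm_diff[OF Suc.IH[OF nF nG]] .
  ultimately show ?case by simp
qed

lemma nsm_sum:
  fixes F :: "'i \<Rightarrow> 'a::euclidean_space \<Rightarrow> 'b::real_normed_vector"
  assumes "open U" "finite S"
  shows "(\<And>i. i \<in> S \<Longrightarrow> nsm n U (F i)) \<Longrightarrow> nsm n U (\<lambda>q. \<Sum>i\<in>S. F i q)"
  using assms(2)
proof (induction S)
  case empty
  then show ?case using nsm_const by simp
next
  case (insert x S)
  have "nsm n U (\<lambda>q. F x q + (\<Sum>i\<in>S. F i q))"
    by (rule nsm_add[OF assms(1)]) (use insert in auto)
  then show ?case using insert by simp
qed

lemma smooth_add: assumes "open U" "smooth_on U F" "smooth_on U G"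
  shows "smooth_on U (\<lambda>q. F q + G q)"
  unfolding smooth_on_nsm
proof
  fix n show "nsm n U (\<lambda>q. F q + G q)"
    by (rule nsm_add[OF assms(1)]) (use assms(2,3) in \<open>simp_all add: smooth_on_nsm\<close>)
qed

lemma smooth_const: "smooth_on U (\<lambda>q. c)"
  unfolding smooth_on_nsm by (simp add: nsm_const)

lemma smooth_bilinear: assumes "open U" "bounded_bilinear pr" "smooth_on U F" "smooth_on U G"
  shows "smooth_on U (\<lambda>q. pr (F q) (G q))"
  unfolding smooth_on_nsm
proof
  fix n show "nsm n U (\<lambda>q. pr (F q) (G q))"
    by (rule nsm_bilinear[OF assms(1,2)]) (use assms(3,4) in \<open>simp_all add: smooth_on_nsm\<close>)
qed

lemma smooth_sum: fixes F :: "'i \<Rightarrow> 'a::euclidean_space \<Rightarrow> 'b::real_normed_vector"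
  assumes "open U" "finite S" "\<And>i. i \<in> S \<Longrightarrow> smooth_on U (F i)"
  shows "smooth_on U (\<lambda>q. \<Sum>i\<in>S. F i q)"
  unfolding smooth_on_nsm
proof
  fix n show "nsm n U (\<lambda>q. \<Sum>i\<in>S. F i q)"
    by (rule nsm_sum[OF assms(1,2)]) (use assms(3) in \<open>simp add: smooth_on_nsm\<close>)
qed

lemma smooth_cong: assumes "open U" "\<forall>q\<in>U. F q = G q" "smooth_on U F" shows "smooth_on U G"
  unfolding smooth_on_nsm
proof
  fix n show "nsm n U G"
    by (rule nsm_cong[OF assms(1,2)]) (use assms(3) in \<open>simp add: smooth_on_nsm\<close>)
qed

lemma smooth_scaleR: "open U \<Longrightarrow> smooth_on U F \<Longrightarrow> smooth_on U G \<Longrightarrow> smooth_on U (\<lambda>q. F q *\<^sub>R G q)"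
  by (rule smooth_bilinear[OF _ bounded_bilinear_scaleR])

lemma smooth_inner: "open U \<Longrightarrow> smooth_on U F \<Longrightarrow> smooth_on U G \<Longrightarrow> smooth_on U (\<lambda>q. F q \<bullet> G q)"
  by (rule smooth_bilinear[OF _ bounded_bilinear_inner])

lemma smooth_diff: "open U \<Longrightarrow> smooth_on U F \<Longrightarrow> smooth_on U G \<Longrightarrow> smooth_on U (\<lambda>q. F q - G q)"
proof -
  assume a: "open U" "smooth_on U F" "smooth_on U G"
  have "smooth_on U (\<lambda>q. (-1::real) *\<^sub>R G q)"
    by (rule smooth_scaleR[OF a(1) smooth_const a(3)])
  then have "smooth_on U (\<lambda>q. F q + (-1::real) *\<^sub>R G q)"
    by (rule smooth_add[OF a(1) a(2)])
  then show ?thesis by simp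
qed

lemma smooth_app:
  assumes U: "open U" and A: "smooth_endo U A" and X: "smooth_on U X"
  shows "smooth_on U (\<lambda>q. A q (X q))"
proof -
  have s1: "smooth_on U (\<lambda>q. \<Sum>b\<in>Basis. (X q \<bullet> b) *\<^sub>R A q b)"
  proof (rule smooth_sum[OF U finite_Basis])
    fix b :: 'a
    have "smooth_on U (\<lambda>q. A q b)" using A unfolding smooth_endo_def by blast
    then show "smooth_on U (\<lambda>q. (X q \<bullet> b) *\<^sub>R A q b)"
      by (rule smooth_scaleR[OF U smooth_inner[OF U X smooth_const]])
  qed
  have s2: "\<forall>q\<in>U. (\<Sum>b\<in>Basis. (X q \<bullet> b) *\<^sub>R A q b) = A q (X q)"
  proof
    fix q assume "q \<in> U"
    then have "linear (A q)" using A unfolding smooth_endo_def by blast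
    then show "(\<Sum>b\<in>Basis. (X q \<bullet> b) *\<^sub>R A q b) = A q (X q)"
      by (rule linear_basis_expand[symmetric])
  qed
  show ?thesis by (rule smooth_cong[OF U s2 s1])
qed

lemma smooth_lie:
  assumes U: "open U" and X: "smooth_on U X" and Y: "smooth_on U Y"
  shows "smooth_on U (lie X Y)"
proof -
  have fd: "frechet_derivative Z (at q) (W q) = (\<Sum>b\<in>Basis. (W q \<bullet> b) *\<^sub>R dderiv b Z q)"
    if "q \<in> U" "smooth_on U Z" for Z W q
  proof -
    have "linear (frechet_derivative Z (at q))"
      by (rule linear_frechet_derivative[OF smooth_diff_at[OF that(2) U that(1)]])
    then show ?thesis unfolding dderiv_def by (rule linear_basis_expand)
  qed
  have s: "smooth_on U (\<lambda>q. \<Sum>b\<in>Basis. (W q \<bullet> b) *\<^sub>R dderiv b Z q)"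
    if "smooth_on U Z" "smooth_on U W" for Z W
  proof (rule smooth_sum[OF U finite_Basis])
    fix b :: 'a
    show "smooth_on U (\<lambda>q. (W q \<bullet> b) *\<^sub>R dderiv b Z q)"
      by (rule smooth_scaleR[OF U smooth_inner[OF U that(2) smooth_const] smooth_dderiv[OF that(1)]])
  qed
  have s1: "smooth_on U (\<lambda>q. (\<Sum>b\<in>Basis. (X q \<bullet> b) *\<^sub>R dderiv b Y q) - (\<Sum>b\<in>Basis. (Y q \<bullet> b) *\<^sub>R dderiv b X q))"
    by (rule smooth_diff[OF U s[OF Y X] s[OF X Y]])
  have s2: "\<forall>q\<in>U. (\<Sum>b\<in>Basis. (X q \<bullet> b) *\<^sub>R dderiv b Y q) - (\<Sum>b\<in>Basis. (Y q \<bullet> b) *\<^sub>R dderiv b X q) = lie X Y q"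
    unfolding lie_def using fd[OF _ Y, of _ X] fd[OF _ X, of _ Y] by simp
  show ?thesis by (rule smooth_cong[OF U s2 s1])
qed



locale rm =
  fixes U :: "'a::euclidean_space set" and g :: "'a \<Rightarrow> 'a \<Rightarrow> 'a \<Rightarrow> real"
  assumes U: "open U" and metric: "riemannian_metric U g"
begin

definition gd where "gd p v y z = dderiv v (\<lambda>q. g q y z) p"

lemma g_bil: "p \<in> U \<Longrightarrow> bilinear (g p)"
  using metric unfolding riemannian_metric_def by blast

lemma g_sym: "p \<in> U \<Longrightarrow> g p u v = g p v u"
  using metric unfolding riemannian_metric_def by blast

lemma g_pos: "p \<in> U \<Longrightarrow> u \<noteq> 0 \<Longrightarrow> g p u u > 0"
  using metric unfolding riemannian_metric_def by blast

lemma g_smooth: "smooth_on U (\<lambda>q. g q u v)"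
  using metric unfolding riemannian_metric_def by blast

lemma g_diff: "p \<in> U \<Longrightarrow> (\<lambda>q. g q u v) differentiable (at p)"
  by (rule smooth_diff_at[OF g_smooth U])

lemma g_has_deriv: "p \<in> U \<Longrightarrow> ((\<lambda>q. g q u v) has_derivative (\<lambda>w. gd p w u v)) (at p)"
  unfolding gd_def dderiv_def by (rule frechet_derivative_works[THEN iffD1, OF g_diff])

lemma g_expand: "p \<in> U \<Longrightarrow> g p y z = (\<Sum>i\<in>Basis. \<Sum>j\<in>Basis. (y \<bullet> i) * (z \<bullet> j) * g p i j)"
proof -
  assume p: "p \<in> U"
  have l1: "linear (\<lambda>y. g p y z)" for z using g_bil[OF p] unfolding bilinear_def by blast
  have l2: "linear (\<lambda>z. g p y z)" for y using g_bil[OF p] unfolding bilinear_def by blast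
  have "g p y z = (\<Sum>i\<in>Basis. (y \<bullet> i) *\<^sub>R g p i z)"
    using linear_basis_expand[OF l1, of y] by simp
  also have "\<dots> = (\<Sum>i\<in>Basis. (y \<bullet> i) * (\<Sum>j\<in>Basis. (z \<bullet> j) *\<^sub>R g p i j))"
  proof (rule sum.cong[OF refl])
    fix i :: 'a
    have "g p i z = (\<Sum>j\<in>Basis. (z \<bullet> j) *\<^sub>R g p i j)"
      using linear_basis_expand[OF l2[of i], of z] by simp
    then show "(y \<bullet> i) *\<^sub>R g p i z = (y \<bullet> i) * (\<Sum>j\<in>Basis. (z \<bullet> j) *\<^sub>R g p i j)" by simp
  qed
  also have "\<dots> = (\<Sum>i\<in>Basis. \<Sum>j\<in>Basis. (y \<bullet> i) * (z \<bullet> j) * g p i j)"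
    by (simp add: sum_distrib_left mult.assoc)
  finally show ?thesis .
qed

lemma gd_expand: "p \<in> U \<Longrightarrow> gd p v y z = (\<Sum>i\<in>Basis. \<Sum>j\<in>Basis. (y \<bullet> i) * (z \<bullet> j) * gd p v i j)"
proof -
  assume p: "p \<in> U"
  have "((\<lambda>q. \<Sum>i\<in>Basis. \<Sum>j\<in>Basis. (y \<bullet> i) * (z \<bullet> j) * g q i j) has_derivative
        (\<lambda>w. \<Sum>i\<in>Basis. \<Sum>j\<in>Basis. (y \<bullet> i) * (z \<bullet> j) * gd p w i j)) (at p)"
    by (intro has_derivative_sum has_derivative_mult_right g_has_deriv p)
  then have "((\<lambda>q. g q y z) has_derivative
        (\<lambda>w. \<Sum>i\<in>Basis. \<Sum>j\<in>Basis. (y \<bullet> i) * (z \<bullet> j) * gd p w i j)) (at p)"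
    by (rule has_derivative_transform_within_open[OF _ U p]) (simp add: g_expand)
  then show ?thesis unfolding gd_def by (rule dderiv_eq)
qed

lemma g_field_deriv:
  assumes p: "p \<in> U" and Y: "(Y has_derivative DY) (at p)" and Z: "(Z has_derivative DZ) (at p)"
  shows "((\<lambda>q. g q (Y q) (Z q)) has_derivative
          (\<lambda>v. gd p v (Y p) (Z p) + g p (DY v) (Z p) + g p (Y p) (DZ v))) (at p)"
proof -
  have "((\<lambda>q. \<Sum>i\<in>Basis. \<Sum>j\<in>Basis. (Y q \<bullet> i) * (Z q \<bullet> j) * g q i j) has_derivative
        (\<lambda>v. \<Sum>i\<in>Basis. \<Sum>j\<in>Basis. (Y p \<bullet> i) * (Z p \<bullet> j) * gd p v i j
             + ((Y p \<bullet> i) * (DZ v \<bullet> j) + (DY v \<bullet> i) * (Z p \<bullet> j)) * g p i j)) (at p)"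
    by (intro has_derivative_sum has_derivative_mult has_derivative_inner_left g_has_deriv p Y Z)
  then have d: "((\<lambda>q. g q (Y q) (Z q)) has_derivative
        (\<lambda>v. \<Sum>i\<in>Basis. \<Sum>j\<in>Basis. (Y p \<bullet> i) * (Z p \<bullet> j) * gd p v i j
             + ((Y p \<bullet> i) * (DZ v \<bullet> j) + (DY v \<bullet> i) * (Z p \<bullet> j)) * g p i j)) (at p)"
    by (rule has_derivative_transform_within_open[OF _ U p]) (simp add: g_expand)
  have "(\<lambda>v. \<Sum>i\<in>Basis. \<Sum>j\<in>Basis. (Y p \<bullet> i) * (Z p \<bullet> j) * gd p v i j
             + ((Y p \<bullet> i) * (DZ v \<bullet> j) + (DY v \<bullet> i) * (Z p \<bullet> j)) * g p i j)
     = (\<lambda>v. gd p v (Y p) (Z p) + g p (DY v) (Z p) + g p (Y p) (DZ v))"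
  proof
    fix v
    have e1: "gd p v (Y p) (Z p) = (\<Sum>i\<in>Basis. \<Sum>j\<in>Basis. (Y p \<bullet> i) * (Z p \<bullet> j) * gd p v i j)"
      by (rule gd_expand[OF p])
    have e2: "g p (DY v) (Z p) = (\<Sum>i\<in>Basis. \<Sum>j\<in>Basis. (DY v \<bullet> i) * (Z p \<bullet> j) * g p i j)"
      by (rule g_expand[OF p])
    have e3: "g p (Y p) (DZ v) = (\<Sum>i\<in>Basis. \<Sum>j\<in>Basis. (Y p \<bullet> i) * (DZ v \<bullet> j) * g p i j)"
      by (rule g_expand[OF p])
    show "(\<Sum>i\<in>Basis. \<Sum>j\<in>Basis. (Y p \<bullet> i) * (Z p \<bullet> j) * gd p v i j
             + ((Y p \<bullet> i) * (DZ v \<bullet> j) + (DY v \<bullet> i) * (Z p \<bullet> j)) * g p i j)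
          = gd p v (Y p) (Z p) + g p (DY v) (Z p) + g p (Y p) (DZ v)"
      unfolding e1 e2 e3 by (simp add: sum.distrib algebra_simps)
  qed
  with d show ?thesis by simp
qed

lemma g_inj: assumes p: "p \<in> U" and h: "\<And>z. g p w1 z = g p w2 z" shows "w1 = w2"
proof (rule ccontr)
  assume "w1 \<noteq> w2"
  then have "g p (w1 - w2) (w1 - w2) > 0" using g_pos[OF p] by simp
  moreover have "g p (w1 - w2) (w1 - w2) = g p w1 (w1 - w2) - g p w2 (w1 - w2)"
    by (rule bilinear_lsub[OF g_bil[OF p]])
  ultimately show False using h by simp
qed

lemma riesz: assumes p: "p \<in> U" and L: "linear L" shows "\<exists>w. \<forall>z. g p w z = L z"
proof -
  define T where "T w = (\<Sum>b\<in>Basis. g p w b *\<^sub>R b)" for w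
  have Tz: "T w \<bullet> z = g p w z" for w z
  proof -
    have l2: "linear (\<lambda>z. g p w z)" using g_bil[OF p] unfolding bilinear_def by blast
    have "g p w z = (\<Sum>b\<in>Basis. (z \<bullet> b) *\<^sub>R g p w b)"
      using linear_basis_expand[OF l2, of z] by simp
    then show ?thesis unfolding T_def inner_sum_left inner_scaleR_left
      by (auto intro!: sum.cong simp: inner_commute)
  qed
  have lin: "linear T"
  proof (rule linearI)
    fix x y :: 'a and c :: real
    show "T (x + y) = T x + T y" unfolding T_def
      by (simp add: bilinear_ladd[OF g_bil[OF p]] scaleR_add_left sum.distrib)
    show "T (c *\<^sub>R x) = c *\<^sub>R T x" unfolding T_def
      by (simp add: bilinear_lmul[OF g_bil[OF p]] scaleR_sum_right)
  qed
  have "inj T"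
  proof (rule injI)
    fix x y assume "T x = T y"
    then have "g p x z = g p y z" for z using Tz by metis
    then show "x = y" using g_inj[OF p] by blast
  qed
  then have "surj T" using linear_inj_imp_surj[OF lin] by blast
  define l where "l = (\<Sum>b\<in>Basis. L b *\<^sub>R b)"
  have lz: "l \<bullet> z = L z" for z
  proof -
    have "L z = (\<Sum>b\<in>Basis. (z \<bullet> b) *\<^sub>R L b)" by (rule linear_basis_expand[OF L])
    then show ?thesis unfolding l_def inner_sum_left inner_scaleR_left
      by (auto intro!: sum.cong simp: inner_commute)
  qed
  obtain w where "T w = l" using \<open>surj T\<close> by (metis surjD)
  then have "\<forall>z. g p w z = L z" using Tz lz by metis
  then show ?thesis by blast
qed

lemma gd_lin1: "p \<in> U \<Longrightarrow> linear (\<lambda>v. gd p v y z)"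
  unfolding gd_def dderiv_def using linear_frechet_derivative[OF g_diff] by simp

lemma gd_sym: "p \<in> U \<Longrightarrow> gd p v y z = gd p v z y"
  unfolding gd_def by (rule dderiv_cong[OF U _]) (auto simp: g_sym)

lemma gd_add2: "p \<in> U \<Longrightarrow> gd p v (y1 + y2) z = gd p v y1 z + gd p v y2 z"
proof -
  assume p: "p \<in> U"
  have e1: "gd p v (y1 + y2) z = (\<Sum>i\<in>Basis. \<Sum>j\<in>Basis. ((y1 + y2) \<bullet> i) * (z \<bullet> j) * gd p v i j)"
    by (rule gd_expand[OF p])
  have e2: "gd p v y1 z = (\<Sum>i\<in>Basis. \<Sum>j\<in>Basis. (y1 \<bullet> i) * (z \<bullet> j) * gd p v i j)"
    by (rule gd_expand[OF p])
  have e3: "gd p v y2 z = (\<Sum>i\<in>Basis. \<Sum>j\<in>Basis. (y2 \<bullet> i) * (z \<bullet> j) * gd p v i j)"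
    by (rule gd_expand[OF p])
  show ?thesis unfolding e1 e2 e3 by (simp add: inner_add_left sum.distrib algebra_simps)
qed

lemma gd_scale2: "p \<in> U \<Longrightarrow> gd p v (c *\<^sub>R y) z = c * gd p v y z"
proof -
  assume p: "p \<in> U"
  have e1: "gd p v (c *\<^sub>R y) z = (\<Sum>i\<in>Basis. \<Sum>j\<in>Basis. ((c *\<^sub>R y) \<bullet> i) * (z \<bullet> j) * gd p v i j)"
    by (rule gd_expand[OF p])
  have e2: "gd p v y z = (\<Sum>i\<in>Basis. \<Sum>j\<in>Basis. (y \<bullet> i) * (z \<bullet> j) * gd p v i j)"
    by (rule gd_expand[OF p])
  show ?thesis unfolding e1 e2 by (simp add: sum_distrib_left algebra_simps)
qed

lemma gd_add3: "p \<in> U \<Longrightarrow> gd p v z (y1 + y2) = gd p v z y1 + gd p v z y2"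
  using gd_add2 gd_sym by metis

lemma gd_scale3: "p \<in> U \<Longrightarrow> gd p v z (c *\<^sub>R y) = c * gd p v z y"
  using gd_scale2 gd_sym by metis

definition K where "K p u v z = (gd p u v z + gd p v u z - gd p z u v) / 2"

lemma K_lin3: "p \<in> U \<Longrightarrow> linear (K p u v)"
proof -
  assume p: "p \<in> U"
  interpret l: linear "\<lambda>z. gd p z u v" by (rule gd_lin1[OF p])
  show ?thesis
    by (rule linearI) (simp_all add: K_def gd_add3[OF p] gd_scale3[OF p] l.add l.scale field_simps)
qed

lemma K_add2: "p \<in> U \<Longrightarrow> K p u (v1 + v2) z = K p u v1 z + K p u v2 z"
proof -
  assume p: "p \<in> U"
  interpret l: linear "\<lambda>v. gd p v u z" by (rule gd_lin1[OF p])
  show ?thesis by (simp add: K_def gd_add2[OF p] gd_add3[OF p] l.add field_simps)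
qed

lemma K_scale2: "p \<in> U \<Longrightarrow> K p u (c *\<^sub>R v) z = c * K p u v z"
proof -
  assume p: "p \<in> U"
  interpret l: linear "\<lambda>v. gd p v u z" by (rule gd_lin1[OF p])
  show ?thesis by (simp add: K_def gd_scale2[OF p] gd_scale3[OF p] l.scale field_simps)
qed

lemma chr: assumes p: "p \<in> U" shows "g p (christoffel g p u v) z = K p u v z"
proof -
  have ex: "\<exists>!w. \<forall>z. g p w z = K p u v z"
  proof -
    obtain w where w: "\<forall>z. g p w z = K p u v z" using riesz[OF p K_lin3[OF p]] by blast
    moreover have "w' = w" if "\<forall>z. g p w' z = K p u v z" for w'
      using g_inj[OF p] that w by metis
    ultimately show ?thesis by blast
  qed
  have "christoffel g p u v = (THE w. \<forall>z. g p w z = K p u v z)"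
    unfolding christoffel_def K_def gd_def ..
  with theI'[OF ex] show ?thesis by simp
qed

lemma chr_sym: assumes p: "p \<in> U" shows "christoffel g p u v = christoffel g p v u"
proof (rule g_inj[OF p])
  fix z show "g p (christoffel g p u v) z = g p (christoffel g p v u) z"
    unfolding chr[OF p] K_def using gd_sym[OF p, of z u v] by simp
qed

lemma chr_lin: assumes p: "p \<in> U" shows "linear (christoffel g p u)"
proof (rule linearI)
  fix x y :: 'a and c :: real
  show "christoffel g p u (x + y) = christoffel g p u x + christoffel g p u y"
    by (rule g_inj[OF p]) (simp add: chr[OF p] K_add2[OF p] bilinear_ladd[OF g_bil[OF p]])
  show "christoffel g p u (c *\<^sub>R x) = c *\<^sub>R christoffel g p u x"
    by (rule g_inj[OF p]) (simp add: chr[OF p] K_scale2[OF p] bilinear_lmul[OF g_bil[OF p]])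
qed

lemma metric_pt: assumes p: "p \<in> U"
  shows "g p (christoffel g p x y) z + g p y (christoffel g p x z) = gd p x y z"
proof -
  have "g p y (christoffel g p x z) = g p (christoffel g p x z) y" by (rule g_sym[OF p])
  then show ?thesis unfolding chr[OF p] using chr[OF p] gd_sym[OF p, of x z y]
    by (simp add: K_def field_simps)
qed

lemma nabla_has: "(V has_derivative DV) (at p) \<Longrightarrow> nabla g X V p = DV (X p) + christoffel g p (X p) (V p)"
proof -
  assume a: "(V has_derivative DV) (at p)"
  have "frechet_derivative V (at p) = DV" using frechet_derivative_at[OF a] by simp
  then show ?thesis by (simp add: nabla_def)
qed

lemma nabla_cong: assumes p: "p \<in> U" and e: "\<forall>q\<in>U. V q = W q" shows "nabla g X V p = nabla g X W p"
proof -
  have "frechet_derivative V (at p) = frechet_derivative W (at p)"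
    using dderiv_cong[OF U e p] unfolding dderiv_def by (rule ext)
  then show ?thesis unfolding nabla_def using e p by simp
qed

lemma nabla_scale:
  assumes p: "p \<in> U" and f: "(f has_derivative Df) (at p)" and V: "(V has_derivative DV) (at p)"
  shows "nabla g X (\<lambda>q. f q *\<^sub>R V q) p = Df (X p) *\<^sub>R V p + f p *\<^sub>R nabla g X V p"
proof -
  have "((\<lambda>q. f q *\<^sub>R V q) has_derivative (\<lambda>h. f p *\<^sub>R DV h + Df h *\<^sub>R V p)) (at p)"
    by (rule has_derivative_scaleR[OF f V])
  then have "nabla g X (\<lambda>q. f q *\<^sub>R V q) p = f p *\<^sub>R DV (X p) + Df (X p) *\<^sub>R V p + christoffel g p (X p) (f p *\<^sub>R V p)"
    by (rule nabla_has[THEN trans]) simp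
  also have "\<dots> = Df (X p) *\<^sub>R V p + f p *\<^sub>R (DV (X p) + christoffel g p (X p) (V p))"
    using linear_cmul[OF chr_lin[OF p]] by (simp add: algebra_simps)
  finally show ?thesis using nabla_has[OF V] by simp
qed

lemma nabla_add:
  assumes p: "p \<in> U" and V: "(V has_derivative DV) (at p)" and W: "(W has_derivative DW) (at p)"
  shows "nabla g X (\<lambda>q. V q + W q) p = nabla g X V p + nabla g X W p"
proof -
  have "nabla g X (\<lambda>q. V q + W q) p = DV (X p) + DW (X p) + christoffel g p (X p) (V p + W p)"
    by (rule nabla_has[OF has_derivative_add[OF V W], THEN trans]) simp
  then show ?thesis using nabla_has[OF V] nabla_has[OF W] linear_add[OF chr_lin[OF p]] by (simp add: algebra_simps)
qed

lemma nabla_diff: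
  assumes p: "p \<in> U" and V: "(V has_derivative DV) (at p)" and W: "(W has_derivative DW) (at p)"
  shows "nabla g X (\<lambda>q. V q - W q) p = nabla g X V p - nabla g X W p"
proof -
  have "nabla g X (\<lambda>q. V q - W q) p = DV (X p) - DW (X p) + christoffel g p (X p) (V p - W p)"
    by (rule nabla_has[OF has_derivative_diff[OF V W], THEN trans]) simp
  then show ?thesis using nabla_has[OF V] nabla_has[OF W] linear_diff[OF chr_lin[OF p]] by (simp add: algebra_simps)
qed

lemma nabla_minus:
  assumes p: "p \<in> U" and V: "(V has_derivative DV) (at p)"
  shows "nabla g X (\<lambda>q. - V q) p = - nabla g X V p"
proof -
  have "nabla g X (\<lambda>q. - V q) p = - DV (X p) + christoffel g p (X p) (- V p)"
    by (rule nabla_has[OF has_derivative_minus[OF V], THEN trans]) simp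
  then show ?thesis using nabla_has[OF V] linear_neg[OF chr_lin[OF p]] by (simp add: algebra_simps)
qed

lemma metric_compat:
  assumes p: "p \<in> U" and Y: "(Y has_derivative DY) (at p)" and Z: "(Z has_derivative DZ) (at p)"
  shows "((\<lambda>q. g q (Y q) (Z q)) has_derivative (\<lambda>v. g p (DY v + christoffel g p v (Y p)) (Z p) + g p (Y p) (DZ v + christoffel g p v (Z p)))) (at p)"
proof -
  have "(\<lambda>v. gd p v (Y p) (Z p) + g p (DY v) (Z p) + g p (Y p) (DZ v)) =
        (\<lambda>v. g p (DY v + christoffel g p v (Y p)) (Z p) + g p (Y p) (DZ v + christoffel g p v (Z p)))"
  proof
    fix v
    show "gd p v (Y p) (Z p) + g p (DY v) (Z p) + g p (Y p) (DZ v) =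
        g p (DY v + christoffel g p v (Y p)) (Z p) + g p (Y p) (DZ v + christoffel g p v (Z p))"
      using metric_pt[OF p, of v "Y p" "Z p"]
      by (simp add: bilinear_ladd[OF g_bil[OF p]] bilinear_radd[OF g_bil[OF p]])
  qed
  with g_field_deriv[OF p Y Z] show ?thesis by simp
qed

lemma metric_compat_nabla:
  assumes p: "p \<in> U" and Y: "Y differentiable (at p)" and Z: "Z differentiable (at p)"
  shows "frechet_derivative (\<lambda>q. g q (Y q) (Z q)) (at p) (X p) = g p (nabla g X Y p) (Z p) + g p (Y p) (nabla g X Z p)"
proof -
  have "frechet_derivative (\<lambda>q. g q (Y q) (Z q)) (at p) = (\<lambda>v. g p (frechet_derivative Y (at p) v + christoffel g p v (Y p)) (Z p) + g p (Y p) (frechet_derivative Z (at p) v + christoffel g p v (Z p)))"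
    using frechet_derivative_at[OF metric_compat[OF p Y[unfolded frechet_derivative_works] Z[unfolded frechet_derivative_works]]] by simp
  then show ?thesis unfolding nabla_def by simp
qed

lemma torsion:
  assumes p: "p \<in> U"
  shows "nabla g X Y p - nabla g Y X p = lie X Y p"
  unfolding nabla_def lie_def using chr_sym[OF p, of "X p" "Y p"] by simp

end


lemma schwarz_aux:
  fixes phi :: "'a::euclidean_space \<Rightarrow> real"
  assumes U: "open U" and p: "p \<in> U" and dphi: "\<And>q. q \<in> U \<Longrightarrow> phi differentiable (at q)"
    and du: "(dderiv u phi has_derivative L) (at p)" and e: "e > 0"
  shows "\<exists>\<delta>>0. \<forall>t. 0 < t \<and> t < \<delta> \<longrightarrow>
     \<bar>(phi (p + t *\<^sub>R u + t *\<^sub>R v) - phi (p + t *\<^sub>R u) - phi (p + t *\<^sub>R v) + phi p) - t\<^sup>2 * L v\<bar>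
       \<le> 2 * e * t\<^sup>2 * (norm u + norm v)"
proof -
  let ?Du = "dderiv u phi"
  obtain d where d: "d > 0" and dd: "\<And>y. norm (y - p) < d \<Longrightarrow> norm (?Du y - ?Du p - L (y - p)) \<le> e * norm (y - p)"
    using du e unfolding has_derivative_at_alt by blast
  have Llin: "linear L" using du has_derivative_linear by blast
  obtain r where r: "r > 0" and rU: "ball p r \<subseteq> U" using U p open_contains_ball by blast
  define N where "N = norm u + norm v + 1"
  have N: "N > 0" unfolding N_def by (simp add: add_nonneg_pos)
  define \<delta> where "\<delta> = min d r / N"
  have \<delta>: "\<delta> > 0" unfolding \<delta>_def using d r N by simp
  have key: "\<bar>(phi (p + t *\<^sub>R u + t *\<^sub>R v) - phi (p + t *\<^sub>R u) - phi (p + t *\<^sub>R v) + phi p) - t\<^sup>2 * L v\<bar>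
       \<le> 2 * e * t\<^sup>2 * (norm u + norm v)" if t: "0 < t" "t < \<delta>" for t
  proof -
    have tN: "t * N < min d r" using t N unfolding \<delta>_def by (simp add: pos_less_divide_eq)
    have small: "norm (s *\<^sub>R u + c *\<^sub>R v) < min d r" if "0 \<le> s" "s \<le> t" "c = t \<or> c = 0" for s c
    proof -
      have "norm (s *\<^sub>R u + c *\<^sub>R v) \<le> s * norm u + t * norm v"
        using that norm_triangle_ineq[of "s *\<^sub>R u" "c *\<^sub>R v"] by (auto simp: abs_of_nonneg)
      also have "\<dots> \<le> t * norm u + t * norm v" using that by (simp add: mult_right_mono)
      also have "\<dots> < t * N" using t unfolding N_def by (simp add: algebra_simps)
      finally show ?thesis using tN by simp
    qed
    have inU: "p + (s *\<^sub>R u + c *\<^sub>R v) \<in> U" if "0 \<le> s" "s \<le> t" "c = t \<or> c = 0" for s c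
    proof -
      have "dist p (p + (s *\<^sub>R u + c *\<^sub>R v)) < r" using small[OF that] norm_minus_cancel[of "s *\<^sub>R u + c *\<^sub>R v"] by (simp add: dist_norm)
      then show ?thesis using rU by auto
    qed
    define G where "G s = phi (p + s *\<^sub>R u + t *\<^sub>R v) - phi (p + s *\<^sub>R u)" for s
    have Gd: "(G has_derivative (\<lambda>h. h * (?Du (p + s *\<^sub>R u + t *\<^sub>R v) - ?Du (p + s *\<^sub>R u)))) (at s within {0..t})"
      if s: "0 \<le> s" "s \<le> t" for s
    proof -
      have chain: "((\<lambda>s. phi (p + s *\<^sub>R u + c *\<^sub>R v)) has_derivative (\<lambda>h. h * ?Du (p + s *\<^sub>R u + c *\<^sub>R v))) (at s within {0..t})"
        if c: "c = t \<or> c = 0" for c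
      proof -
        let ?q = "p + s *\<^sub>R u + c *\<^sub>R v"
        have qU: "?q \<in> U" using inU[OF s c] by (simp add: add.assoc)
        have f1: "((\<lambda>s. p + s *\<^sub>R u + c *\<^sub>R v) has_derivative (\<lambda>h. h *\<^sub>R u)) (at s within {0..t})"
          by (auto intro!: derivative_eq_intros)
        have f2: "(phi has_derivative frechet_derivative phi (at ?q)) (at ?q)"
          using dphi[OF qU] frechet_derivative_works by blast
        have lin: "linear (frechet_derivative phi (at ?q))" using f2 has_derivative_linear by blast
        have "((\<lambda>s. phi (p + s *\<^sub>R u + c *\<^sub>R v)) has_derivative (\<lambda>h. frechet_derivative phi (at ?q) (h *\<^sub>R u))) (at s within {0..t})"
          using has_derivative_compose[OF f1 f2] by simp
        moreover have "(\<lambda>h. frechet_derivative phi (at ?q) (h *\<^sub>R u)) = (\<lambda>h. h * ?Du ?q)"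
          using linear_cmul[OF lin] unfolding dderiv_def by auto
        ultimately show ?thesis by simp
      qed
      have "((\<lambda>s. phi (p + s *\<^sub>R u + t *\<^sub>R v) - phi (p + s *\<^sub>R u + 0 *\<^sub>R v)) has_derivative
         (\<lambda>h. h * ?Du (p + s *\<^sub>R u + t *\<^sub>R v) - h * ?Du (p + s *\<^sub>R u + 0 *\<^sub>R v))) (at s within {0..t})"
        by (rule has_derivative_diff[OF chain chain]) simp_all
      then show ?thesis unfolding G_def by (simp add: algebra_simps)
    qed
    obtain \<xi> where \<xi>: "\<xi> \<in> {0<..<t}" and mv: "G t - G 0 = (t - 0) * (?Du (p + \<xi> *\<^sub>R u + t *\<^sub>R v) - ?Du (p + \<xi> *\<^sub>R u))"
      using mvt_simple[OF t(1) Gd] by auto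
    have \<Delta>: "phi (p + t *\<^sub>R u + t *\<^sub>R v) - phi (p + t *\<^sub>R u) - phi (p + t *\<^sub>R v) + phi p
       = t * (?Du (p + \<xi> *\<^sub>R u + t *\<^sub>R v) - ?Du (p + \<xi> *\<^sub>R u))"
      using mv unfolding G_def by simp
    define w1 where "w1 = \<xi> *\<^sub>R u + t *\<^sub>R v"
    define w2 where "w2 = \<xi> *\<^sub>R u + 0 *\<^sub>R v"
    have \<xi>0: "0 \<le> \<xi>" "\<xi> \<le> t" using \<xi> by auto
    have n1: "norm w1 < d" using small[OF \<xi>0, of t] unfolding w1_def by simp
    have n2: "norm w2 < d" using small[OF \<xi>0, of 0] unfolding w2_def by simp
    have b1: "\<bar>?Du (p + w1) - ?Du p - L w1\<bar> \<le> e * norm w1" using dd[of "p + w1"] n1 by simp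
    have b2: "\<bar>?Du (p + w2) - ?Du p - L w2\<bar> \<le> e * norm w2" using dd[of "p + w2"] n2 by simp
    have Lw: "L w1 - L w2 = t * L v"
      unfolding w1_def w2_def using linear_add[OF Llin] linear_cmul[OF Llin] by simp
    have nw1: "norm w1 \<le> t * (norm u + norm v)"
    proof -
      have "norm w1 \<le> \<xi> * norm u + t * norm v"
        using \<xi>0 t norm_triangle_ineq[of "\<xi> *\<^sub>R u" "t *\<^sub>R v"] unfolding w1_def by (simp add: abs_of_nonneg)
      also have "\<dots> \<le> t * norm u + t * norm v" using \<xi>0 by (simp add: mult_right_mono)
      finally show ?thesis by (simp add: algebra_simps)
    qed
    have nw2: "norm w2 \<le> t * (norm u + norm v)"
    proof -
      have "norm w2 = \<xi> * norm u" using \<xi>0 unfolding w2_def by simp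
      also have "\<dots> \<le> t * norm u" using \<xi>0 by (simp add: mult_right_mono)
      also have "\<dots> \<le> t * (norm u + norm v)" using t by (simp add: algebra_simps)
      finally show ?thesis .
    qed
    have "\<bar>(?Du (p + w1) - ?Du (p + w2)) - t * L v\<bar> \<le> e * norm w1 + e * norm w2"
      using b1 b2 Lw by linarith
    also have "\<dots> \<le> 2 * e * t * (norm u + norm v)"
      using mult_left_mono[OF nw1, of e] mult_left_mono[OF nw2, of e] e by (simp add: algebra_simps)
    finally have est: "\<bar>(?Du (p + w1) - ?Du (p + w2)) - t * L v\<bar> \<le> 2 * e * t * (norm u + norm v)" .
    have "\<bar>t * ((?Du (p + w1) - ?Du (p + w2)) - t * L v)\<bar> \<le> t * (2 * e * t * (norm u + norm v))"
      using mult_left_mono[OF est, of t] t by (simp add: abs_mult)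
    moreover have "p + \<xi> *\<^sub>R u + t *\<^sub>R v = p + w1" "p + \<xi> *\<^sub>R u = p + w2"
      unfolding w1_def w2_def by (simp_all add: add.assoc)
    ultimately show ?thesis unfolding \<Delta> by (simp add: algebra_simps power2_eq_square)
  qed
  show ?thesis using \<delta> key by blast
qed

lemma schwarz:
  fixes phi :: "'a::euclidean_space \<Rightarrow> real"
  assumes U: "open U" and p: "p \<in> U" and dphi: "\<And>q. q \<in> U \<Longrightarrow> phi differentiable (at q)"
    and du: "dderiv u phi differentiable (at p)" and dv: "dderiv v phi differentiable (at p)"
  shows "dderiv v (dderiv u phi) p = dderiv u (dderiv v phi) p"
proof -
  define L1 where "L1 = frechet_derivative (dderiv u phi) (at p)"
  define L2 where "L2 = frechet_derivative (dderiv v phi) (at p)"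
  have h1: "(dderiv u phi has_derivative L1) (at p)" using du frechet_derivative_works L1_def by blast
  have h2: "(dderiv v phi has_derivative L2) (at p)" using dv frechet_derivative_works L2_def by blast
  have sym: "p + t *\<^sub>R v + t *\<^sub>R u = p + t *\<^sub>R u + t *\<^sub>R v" for t by (simp add: algebra_simps)
  define N where "N = norm u + norm v"
  have N: "N \<ge> 0" unfolding N_def by simp
  have bound: "\<bar>L1 v - L2 u\<bar> \<le> 4 * e * N" if e: "e > 0" for e
  proof -
    obtain d1 where d1: "d1 > 0" and k1: "\<And>t. 0 < t \<Longrightarrow> t < d1 \<Longrightarrow>
       \<bar>(phi (p + t *\<^sub>R u + t *\<^sub>R v) - phi (p + t *\<^sub>R u) - phi (p + t *\<^sub>R v) + phi p) - t\<^sup>2 * L1 v\<bar>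
       \<le> 2 * e * t\<^sup>2 * (norm u + norm v)"
      using schwarz_aux[OF U p dphi h1 e, of v] by blast
    obtain d2 where d2: "d2 > 0" and k2: "\<And>t. 0 < t \<Longrightarrow> t < d2 \<Longrightarrow>
       \<bar>(phi (p + t *\<^sub>R v + t *\<^sub>R u) - phi (p + t *\<^sub>R v) - phi (p + t *\<^sub>R u) + phi p) - t\<^sup>2 * L2 u\<bar>
       \<le> 2 * e * t\<^sup>2 * (norm v + norm u)"
      using schwarz_aux[OF U p dphi h2 e, of u] by blast
    define t where "t = min d1 d2 / 2"
    have t: "0 < t" "t < d1" "t < d2" unfolding t_def using d1 d2 by auto
    define D where "D = phi (p + t *\<^sub>R u + t *\<^sub>R v) - phi (p + t *\<^sub>R u) - phi (p + t *\<^sub>R v) + phi p"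
    have a1: "\<bar>D - t\<^sup>2 * L1 v\<bar> \<le> 2 * e * t\<^sup>2 * N" using k1[OF t(1,2)] unfolding D_def N_def .
    have a2: "\<bar>D - t\<^sup>2 * L2 u\<bar> \<le> 2 * e * t\<^sup>2 * N" using k2[OF t(1,3)] unfolding D_def N_def sym
      by (simp add: algebra_simps)
    have "\<bar>t\<^sup>2 * (L1 v - L2 u)\<bar> \<le> t\<^sup>2 * (4 * e * N)" using a1 a2 by (simp add: abs_le_iff algebra_simps)
    moreover have "t\<^sup>2 > 0" using t by simp
    ultimately show ?thesis by (simp add: abs_mult)
  qed
  have "L1 v = L2 u"
  proof (rule ccontr)
    assume ne: "L1 v \<noteq> L2 u"
    define e where "e = \<bar>L1 v - L2 u\<bar> / (8 * (N + 1))"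
    have e: "e > 0" unfolding e_def using ne N by simp
    have "\<bar>L1 v - L2 u\<bar> \<le> 4 * e * N" by (rule bound[OF e])
    also have "\<dots> < \<bar>L1 v - L2 u\<bar>"
    proof -
      have pos: "\<bar>L1 v - L2 u\<bar> > 0" using ne by simp
      have "4 * e * N = \<bar>L1 v - L2 u\<bar> * (N / (2 * (N + 1)))" unfolding e_def using N by (simp add: field_simps)
      moreover have "N / (2 * (N + 1)) < 1" using N by (simp add: field_simps)
      moreover have "\<bar>L1 v - L2 u\<bar> * (N / (2 * (N + 1))) < \<bar>L1 v - L2 u\<bar> * 1"
        by (rule mult_strict_left_mono[OF calculation(2) pos])
      ultimately show ?thesis by simp
    qed
    finally show False by simp
  qed
  then show ?thesis unfolding L1_def L2_def dderiv_def by simp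
qed

lemma second_deriv_field:
  fixes phi :: "'a::euclidean_space \<Rightarrow> real"
  assumes U: "open U" and p: "p \<in> U" and dphi: "\<And>q. q \<in> U \<Longrightarrow> phi differentiable (at q)"
    and d2: "\<And>w. dderiv w phi differentiable (at p)"
    and Y: "(Y has_derivative DY) (at p)"
  shows "((\<lambda>q. frechet_derivative phi (at q) (Y q)) has_derivative
           (\<lambda>h. frechet_derivative phi (at p) (DY h) + dderiv (Y p) (dderiv h phi) p)) (at p)"
proof -
  have hb: "(dderiv b phi has_derivative (\<lambda>h. dderiv h (dderiv b phi) p)) (at p)" for b
    unfolding dderiv_def[of _ "dderiv b phi"] by (simp add: frechet_derivative_works[THEN iffD1, OF d2])
  have "((\<lambda>q. \<Sum>b\<in>Basis. (Y q \<bullet> b) * dderiv b phi q) has_derivative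
         (\<lambda>h. \<Sum>b\<in>Basis. (Y p \<bullet> b) * dderiv h (dderiv b phi) p + (DY h \<bullet> b) * dderiv b phi p)) (at p)"
    by (intro has_derivative_sum has_derivative_mult has_derivative_inner_left Y hb)
  moreover have "\<And>q. q \<in> U \<Longrightarrow> (\<Sum>b\<in>Basis. (Y q \<bullet> b) * dderiv b phi q) = frechet_derivative phi (at q) (Y q)"
  proof -
    fix q assume q: "q \<in> U"
    have "linear (frechet_derivative phi (at q))" by (rule linear_frechet_derivative[OF dphi[OF q]])
    from linear_basis_expand[OF this, of "Y q"] show "(\<Sum>b\<in>Basis. (Y q \<bullet> b) * dderiv b phi q) = frechet_derivative phi (at q) (Y q)"
      unfolding dderiv_def by simp
  qed
  ultimately have D: "((\<lambda>q. frechet_derivative phi (at q) (Y q)) has_derivative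
         (\<lambda>h. \<Sum>b\<in>Basis. (Y p \<bullet> b) * dderiv h (dderiv b phi) p + (DY h \<bullet> b) * dderiv b phi p)) (at p)"
    by (rule has_derivative_transform_within_open[OF _ U p])
  have "(\<Sum>b\<in>Basis. (Y p \<bullet> b) * dderiv h (dderiv b phi) p + (DY h \<bullet> b) * dderiv b phi p)
       = frechet_derivative phi (at p) (DY h) + dderiv (Y p) (dderiv h phi) p" for h
  proof -
    have sw: "dderiv h (dderiv b phi) p = dderiv b (dderiv h phi) p" for b
      by (rule schwarz[OF U p dphi d2 d2])
    have l1: "linear (frechet_derivative phi (at p))" by (rule linear_frechet_derivative[OF dphi[OF p]])
    have l2: "linear (frechet_derivative (dderiv h phi) (at p))" by (rule linear_frechet_derivative[OF d2])
    have e1: "frechet_derivative phi (at p) (DY h) = (\<Sum>b\<in>Basis. (DY h \<bullet> b) * dderiv b phi p)"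
      using linear_basis_expand[OF l1, of "DY h"] unfolding dderiv_def by simp
    have e2: "dderiv (Y p) (dderiv h phi) p = (\<Sum>b\<in>Basis. (Y p \<bullet> b) * dderiv b (dderiv h phi) p)"
      using linear_basis_expand[OF l2, of "Y p"] unfolding dderiv_def[of _ "dderiv h phi"] by simp
    show ?thesis unfolding e1 e2 sw by (simp add: sum.distrib)
  qed
  with D show ?thesis by simp
qed

lemma commutator:
  fixes phi :: "'a::euclidean_space \<Rightarrow> real"
  assumes U: "open U" and p: "p \<in> U" and dphi: "\<And>q. q \<in> U \<Longrightarrow> phi differentiable (at q)"
    and d2: "\<And>w. dderiv w phi differentiable (at p)"
    and X: "X differentiable (at p)" and Y: "Y differentiable (at p)"
  shows "frechet_derivative (\<lambda>q. frechet_derivative phi (at q) (Y q)) (at p) (X p)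
       - frechet_derivative (\<lambda>q. frechet_derivative phi (at q) (X q)) (at p) (Y p)
       = frechet_derivative phi (at p) (lie X Y p)"
proof -
  have hX: "(X has_derivative frechet_derivative X (at p)) (at p)" using X frechet_derivative_works by blast
  have hY: "(Y has_derivative frechet_derivative Y (at p)) (at p)" using Y frechet_derivative_works by blast
  have a: "frechet_derivative (\<lambda>q. frechet_derivative phi (at q) (Y q)) (at p) (X p)
     = frechet_derivative phi (at p) (frechet_derivative Y (at p) (X p)) + dderiv (Y p) (dderiv (X p) phi) p"
    using frechet_derivative_at[OF second_deriv_field[OF U p dphi d2 hY], symmetric] by simp
  have b: "frechet_derivative (\<lambda>q. frechet_derivative phi (at q) (X q)) (at p) (Y p)
     = frechet_derivative phi (at p) (frechet_derivative X (at p) (Y p)) + dderiv (X p) (dderiv (Y p) phi) p"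
    using frechet_derivative_at[OF second_deriv_field[OF U p dphi d2 hX], symmetric] by simp
  have sw: "dderiv (Y p) (dderiv (X p) phi) p = dderiv (X p) (dderiv (Y p) phi) p"
    by (rule schwarz[OF U p dphi d2 d2])
  have l1: "linear (frechet_derivative phi (at p))" by (rule linear_frechet_derivative[OF dphi[OF p]])
  show ?thesis unfolding a b sw lie_def linear_diff[OF l1] by simp
qed



lemma final_alg:
  fixes G :: "'a::real_vector \<Rightarrow> 'a \<Rightarrow> real" and Jm :: "'a \<Rightarrow> 'a"
  assumes bil: "bilinear G" and sym: "\<And>u v. G u v = G v u" and Jlin: "linear Jm"
    and JJ: "\<And>v. Jm (Jm v) = - v" and Jorth: "\<And>u v. G (Jm u) (Jm v) = G u v"
    and kf: "k * (f - 1) = 4" and kr: "k * G e e + f = -1" and Ce: "G C e = 0"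
    and T_def: "\<And>a v. T a v = k *\<^sub>R (contr G v (Jm e) a + contr G v e (Jm a))"
    and W_def: "\<And>v. W v = - Jm v - (k * G e v) *\<^sub>R Jm e - (k * G e (Jm v)) *\<^sub>R e"
    and D1x: "D1x = k\<^sup>2 * G a e * G e b + k * (G (f *\<^sub>R a) b + G e P)"
    and D1y: "D1y = k\<^sup>2 * G b e * G e a + k * (G (f *\<^sub>R b) a + G e Q)"
    and D2x: "D2x = k\<^sup>2 * G a e * G e (Jm b) + k * (G (f *\<^sub>R a) (Jm b) + G e (T a b + Jm P))"
    and D2y: "D2y = k\<^sup>2 * G b e * G e (Jm a) + k * (G (f *\<^sub>R b) (Jm a) + G e (T b a + Jm Q))"
  shows "(- (T a b + Jm P) - (D1x *\<^sub>R Jm e + (k * G e b) *\<^sub>R W a) - (D2x *\<^sub>R e + (k * G e (Jm b)) *\<^sub>R (f *\<^sub>R a)))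
       - (- (T b a + Jm Q) - (D1y *\<^sub>R Jm e + (k * G e a) *\<^sub>R W b) - (D2y *\<^sub>R e + (k * G e (Jm a)) *\<^sub>R (f *\<^sub>R b)))
       - W (P - Q - C)
     = - Jm C + (k * G C (Jm e)) *\<^sub>R e - 4 *\<^sub>R contr G (Jm e) a b"
proof -
  interpret J: linear Jm by (rule Jlin)
  have gl: "G (x + y) z = G x z + G y z" "G z (x + y) = G z x + G z y"
      "G (x - y) z = G x z - G y z" "G z (x - y) = G z x - G z y"
      "G (c *\<^sub>R x) z = c * G x z" "G z (c *\<^sub>R x) = c * G z x"
      "G (- x) z = - G x z" "G z (- x) = - G z x" for x y z c
    using bilinear_ladd[OF bil] bilinear_radd[OF bil] bilinear_lsub[OF bil] bilinear_rsub[OF bil]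
      bilinear_lmul[OF bil] bilinear_rmul[OF bil] bilinear_lneg[OF bil] bilinear_rneg[OF bil] by simp_all
  define cJe where "cJe = k*G b a - D1x + (k*G e b)*(k*G e a) - k*G a b + D1y - (k*G e a)*(k*G e b) + k*G e (P - Q - C)"
  define ce where "ce = k*G b (Jm a) - D2x + (k*G e b)*(k*G e (Jm a)) - k*G a (Jm b) + D2y - (k*G e a)*(k*G e (Jm b)) + k*G e (Jm (P-Q-C))"
  define ca where "ca = -k*G b (Jm e) - (k*G e (Jm b))*f"
  define cb where "cb = k*G a (Jm e) + (k*G e (Jm a))*f"
  define cJa where "cJa = -k*G b e + k*G e b"
  define cJb where "cJb = k*G a e - k*G e a"
  have step1: "(- (T a b + Jm P) - (D1x *\<^sub>R Jm e + (k * G e b) *\<^sub>R W a) - (D2x *\<^sub>R e + (k * G e (Jm b)) *\<^sub>R (f *\<^sub>R a)))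
       - (- (T b a + Jm Q) - (D1y *\<^sub>R Jm e + (k * G e a) *\<^sub>R W b) - (D2y *\<^sub>R e + (k * G e (Jm a)) *\<^sub>R (f *\<^sub>R b)))
       - W (P - Q - C)
     = - Jm C + cJe *\<^sub>R Jm e + ce *\<^sub>R e + ca *\<^sub>R a + cb *\<^sub>R b + cJa *\<^sub>R Jm a + cJb *\<^sub>R Jm b"
    unfolding T_def W_def contr_def cJe_def ce_def ca_def cb_def cJa_def cJb_def
    by (simp add: J.add J.diff J.scale J.neg algebra_simps)
  have jr: "G u (Jm v) = - G (Jm u) v" for u v
    using Jorth[of u "Jm v"] JJ[of v] gl(8) by simp
  have Je0: "G e (Jm e) = 0" using jr[of e e] sym[of e "Jm e"] by simp
  have r: "G b a = G a b" "G a e = G e a" "G b e = G e b" "G e C = 0"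
     "G b (Jm a) = - G a (Jm b)" "G b (Jm e) = - G e (Jm b)" "G a (Jm e) = - G e (Jm a)"
     "G C (Jm e) = - G e (Jm C)" "G (Jm e) a = - G e (Jm a)" "G (Jm e) b = - G e (Jm b)"
     "G e (Jm e) = 0"
  proof -
    have jr2: "G u (Jm v) = - G v (Jm u)" for u v using jr[of u v] sym[of "Jm u" v] by simp
    have jr3: "G (Jm u) v = - G u (Jm v)" for u v using jr[of u v] by simp
    show "G b a = G a b" "G a e = G e a" "G b e = G e b" by (rule sym)+
    show "G e C = 0" using sym[of e C] Ce by simp
    show "G b (Jm a) = - G a (Jm b)" "G b (Jm e) = - G e (Jm b)" "G a (Jm e) = - G e (Jm a)"
     "G C (Jm e) = - G e (Jm C)" by (rule jr2)+
    show "G (Jm e) a = - G e (Jm a)" "G (Jm e) b = - G e (Jm b)" by (rule jr3)+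
    show "G e (Jm e) = 0" by (rule Je0)
  qed
  have fe: "f = -1 - k * G e e" using kr by simp
  have c1: "cJe = 0" unfolding cJe_def D1x D1y by (simp add: gl r algebra_simps)
  have c2: "ce = k * G C (Jm e)"
    unfolding ce_def D2x D2y T_def contr_def by (simp add: gl J.add J.diff J.scale J.neg JJ r fe algebra_simps power2_eq_square)
  have c3: "ca = 4 * G (Jm e) b"
  proof -
    have "ca = G e (Jm b) * (k * (1 - f))" unfolding ca_def by (simp add: r algebra_simps)
    moreover have "k * (1 - f) = -4" using kf by (simp add: algebra_simps)
    ultimately show ?thesis by (simp add: r)
  qed
  have c4: "cb = - 4 * G (Jm e) a"
  proof -
    have "cb = - G e (Jm a) * (k * (1 - f))" unfolding cb_def by (simp add: r algebra_simps)
    moreover have "k * (1 - f) = -4" using kf by (simp add: algebra_simps)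
    ultimately show ?thesis by (simp add: r)
  qed
  have c5: "cJa = 0" "cJb = 0" unfolding cJa_def cJb_def by (simp_all add: r)
  show ?thesis unfolding step1 c1 c2 c3 c4 c5 contr_def by (simp add: algebra_simps)
qed



locale L5 = rm U g for U :: "'a::euclidean_space set" and g +
  fixes J A :: "'a \<Rightarrow> 'a \<Rightarrow> 'a" and eta :: "'a \<Rightarrow> 'a" and f :: "'a \<Rightarrow> real"
  assumes f_def: "f = (\<lambda>p. sqrt (1 - 4 * (sqrt (g p (eta p) (eta p)))\<^sup>2))"
    and J_smooth: "smooth_endo U J"
    and J_cplx: "\<forall>p\<in>U. \<forall>v. J p (J p v) = - v"
    and J_orth: "\<forall>p\<in>U. \<forall>u v. g p (J p u) (J p v) = g p u v"
    and A_smooth: "smooth_endo U A"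
    and eta_smooth: "smooth_vf U eta"
    and rho_bounds: "\<forall>p\<in>U. 0 < sqrt (g p (eta p) (eta p)) \<and> sqrt (g p (eta p) (eta p)) < 1/2"
    and hypJ: "\<forall>X Y. smooth_vf U X \<longrightarrow> smooth_vf U Y \<longrightarrow> (\<forall>p\<in>U.
        nabla_endo g Y J X p =
          (4 / (f p - 1)) *\<^sub>R (contr (g p) (X p) (J p (eta p)) (A p (Y p))
                               + contr (g p) (X p) (eta p) (J p (A p (Y p)))))"
    and hypEta: "\<forall>X. smooth_vf U X \<longrightarrow> (\<forall>p\<in>U. nabla g X eta p = f p *\<^sub>R A p (X p))"
begin

definition s where "s q = g q (eta q) (eta q)"
definition k where "k q = 4 / (f q - 1)"

lemma s_bounds: "q \<in> U \<Longrightarrow> 0 < s q \<and> s q < 1/4"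
proof -
  assume q: "q \<in> U"
  have a: "0 < sqrt (s q)" "sqrt (s q) < 1/2" using rho_bounds q unfolding s_def by auto
  then have s0: "0 < s q" by simp
  have "sqrt (s q) < sqrt (1/4)" using a by (simp add: real_sqrt_divide)
  then show ?thesis using s0 by (simp only: real_sqrt_less_iff)
qed

lemma f_eq: "q \<in> U \<Longrightarrow> f q = sqrt (1 - 4 * s q)"
  using s_bounds[of q] unfolding f_def s_def by simp

lemma f_bounds: "q \<in> U \<Longrightarrow> 0 < f q \<and> f q < 1"
  using s_bounds[of q] f_eq[of q] by auto

lemma f_sq: "q \<in> U \<Longrightarrow> (f q)\<^sup>2 = 1 - 4 * s q"
  using s_bounds[of q] f_eq[of q] by simp

lemma k_rel1: "q \<in> U \<Longrightarrow> k q * (f q - 1) = 4"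
proof -
  assume q: "q \<in> U"
  have "f q - 1 \<noteq> 0" using f_bounds[OF q] by simp
  then show ?thesis unfolding k_def by (simp add: field_simps)
qed

lemma k_rel2: "q \<in> U \<Longrightarrow> k q * s q + f q = -1"
proof -
  assume q: "q \<in> U"
  have ne: "f q - 1 \<noteq> 0" using f_bounds[OF q] by simp
  have "4 * s q = 1 - (f q)\<^sup>2" using f_sq[OF q] by simp
  then have "k q * s q = (1 - (f q)\<^sup>2) / (f q - 1)" unfolding k_def by (simp add: field_simps)
  also have "\<dots> = - (1 + f q)" using ne by (simp add: field_simps power2_eq_square)
  finally show ?thesis by simp
qed

lemma eta_sm: "smooth_on U eta" using eta_smooth unfolding smooth_vf_def .

lemma app_sm: "smooth_endo U B \<Longrightarrow> smooth_on U X \<Longrightarrow> smooth_on U (\<lambda>q. B q (X q))"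
  by (rule smooth_app[OF U])

lemma sm_diff: "smooth_on U X \<Longrightarrow> q \<in> U \<Longrightarrow> X differentiable (at q)"
  by (rule smooth_diff_at[OF _ U])

lemma sm_hasd: "smooth_on U X \<Longrightarrow> q \<in> U \<Longrightarrow> (X has_derivative frechet_derivative X (at q)) (at q)"
  using sm_diff frechet_derivative_works by blast

lemma nabla_eta_dir: "q \<in> U \<Longrightarrow> frechet_derivative eta (at q) v + christoffel g q v (eta q) = f q *\<^sub>R A q v"
proof -
  assume q: "q \<in> U"
  have "smooth_vf U (\<lambda>_. v)" unfolding smooth_vf_def by (rule smooth_const)
  then have "nabla g (\<lambda>_. v) eta q = f q *\<^sub>R A q v" using hypEta q by blast
  then show ?thesis unfolding nabla_def by simp
qed

lemma A_lin: "q \<in> U \<Longrightarrow> linear (A q)" using A_smooth unfolding smooth_endo_def by blast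
lemma J_lin: "q \<in> U \<Longrightarrow> linear (J q)" using J_smooth unfolding smooth_endo_def by blast

lemma s_deriv: "q \<in> U \<Longrightarrow> (s has_derivative (\<lambda>v. 2 * f q * g q (A q v) (eta q))) (at q)"
proof -
  assume q: "q \<in> U"
  have "((\<lambda>q. g q (eta q) (eta q)) has_derivative
     (\<lambda>v. g q (frechet_derivative eta (at q) v + christoffel g q v (eta q)) (eta q)
        + g q (eta q) (frechet_derivative eta (at q) v + christoffel g q v (eta q)))) (at q)"
    by (rule metric_compat[OF q sm_hasd[OF eta_sm q] sm_hasd[OF eta_sm q]])
  moreover have "(\<lambda>v. g q (frechet_derivative eta (at q) v + christoffel g q v (eta q)) (eta q)
        + g q (eta q) (frechet_derivative eta (at q) v + christoffel g q v (eta q)))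
     = (\<lambda>v. 2 * f q * g q (A q v) (eta q))"
  proof
    fix v
    show "g q (frechet_derivative eta (at q) v + christoffel g q v (eta q)) (eta q)
        + g q (eta q) (frechet_derivative eta (at q) v + christoffel g q v (eta q)) = 2 * f q * g q (A q v) (eta q)"
      unfolding nabla_eta_dir[OF q] using g_sym[OF q, of "eta q" "f q *\<^sub>R A q v"]
      by (simp add: bilinear_lmul[OF g_bil[OF q]])
  qed
  ultimately show ?thesis unfolding s_def by simp
qed

lemma f_deriv: "q \<in> U \<Longrightarrow> (f has_derivative (\<lambda>v. -4 * g q (A q v) (eta q))) (at q)"
proof -
  assume q: "q \<in> U"
  have pos: "0 < 1 - 4 * s q" using s_bounds[OF q] by simp
  have "((\<lambda>q. 1 - 4 * s q) has_derivative (\<lambda>v. - (4 * (2 * f q * g q (A q v) (eta q))))) (at q)"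
    by (auto intro!: derivative_eq_intros s_deriv[OF q])
  from DERIV_compose_FDERIV[OF DERIV_real_sqrt[OF pos] this]
  have "((\<lambda>q. sqrt (1 - 4 * s q)) has_derivative
      (\<lambda>v. - (4 * (2 * f q * g q (A q v) (eta q))) * (inverse (sqrt (1 - 4 * s q)) / 2))) (at q)" .
  moreover have "(\<lambda>v. - (4 * (2 * f q * g q (A q v) (eta q))) * (inverse (sqrt (1 - 4 * s q)) / 2))
     = (\<lambda>v. -4 * g q (A q v) (eta q))"
    using f_eq[OF q, symmetric] f_bounds[OF q] by (auto simp: field_simps)
  ultimately have "((\<lambda>q. sqrt (1 - 4 * s q)) has_derivative (\<lambda>v. -4 * g q (A q v) (eta q))) (at q)" by simp
  then show ?thesis
    by (rule has_derivative_transform_within_open[OF _ U q]) (simp add: f_eq)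
qed

lemma f_diff: "q \<in> U \<Longrightarrow> f differentiable (at q)"
  using f_deriv unfolding differentiable_def by blast

lemma dderiv_f: "q \<in> U \<Longrightarrow> dderiv w f q = -4 * g q (A q w) (eta q)"
  unfolding dderiv_def using frechet_derivative_at[OF f_deriv, symmetric] by simp

lemma k_deriv: "q \<in> U \<Longrightarrow> (k has_derivative (\<lambda>v. (k q)\<^sup>2 * g q (A q v) (eta q))) (at q)"
proof -
  assume q: "q \<in> U"
  have ne: "f q - 1 \<noteq> 0" using f_bounds[OF q] by simp
  have "DERIV (\<lambda>t. 4 / (t - 1)) (f q) :> - 4 / (f q - 1)\<^sup>2"
    using ne by (auto intro!: derivative_eq_intros simp: power2_eq_square)
  from DERIV_compose_FDERIV[OF this f_deriv[OF q]]
  have "(k has_derivative (\<lambda>v. -4 * g q (A q v) (eta q) * (- 4 / (f q - 1)\<^sup>2))) (at q)"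
    unfolding k_def[abs_def] .
  moreover have "(\<lambda>v. -4 * g q (A q v) (eta q) * (- 4 / (f q - 1)\<^sup>2)) = (\<lambda>v. (k q)\<^sup>2 * g q (A q v) (eta q))"
    unfolding k_def using ne by (auto simp: field_simps power2_eq_square)
  ultimately show ?thesis by simp
qed

lemma fd_cong: assumes "p \<in> U" "\<forall>q\<in>U. F q = G q" shows "frechet_derivative F (at p) = frechet_derivative G (at p)"
proof
  fix v show "frechet_derivative F (at p) v = frechet_derivative G (at p) v"
    using dderiv_cong[OF U assms(2) assms(1), of v] unfolding dderiv_def .
qed

lemma g_fd: assumes p: "p \<in> U" and Y: "smooth_on U Y" and Z: "smooth_on U Z"
  shows "frechet_derivative (\<lambda>q. g q (Y q) (Z q)) (at p) (X p) = g p (nabla g X Y p) (Z p) + g p (Y p) (nabla g X Z p)"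
  by (rule metric_compat_nabla[OF p sm_diff[OF Y p] sm_diff[OF Z p]])

lemma g_diffat: assumes p: "p \<in> U" and Y: "smooth_on U Y" and Z: "smooth_on U Z"
  shows "(\<lambda>q. g q (Y q) (Z q)) differentiable (at p)"
  using metric_compat[OF p sm_hasd[OF Y p] sm_hasd[OF Z p]] unfolding differentiable_def by blast

lemma fd_cmult: fixes h :: "'a \<Rightarrow> real" shows "h differentiable (at p) \<Longrightarrow> frechet_derivative (\<lambda>q. c * h q) (at p) v = c * frechet_derivative h (at p) v"
proof -
  assume "h differentiable (at p)"
  then have "(h has_derivative frechet_derivative h (at p)) (at p)" using frechet_derivative_works by blast
  then have "((\<lambda>q. c * h q) has_derivative (\<lambda>v. c * frechet_derivative h (at p) v)) (at p)"
    by (rule has_derivative_mult_right)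
  from frechet_derivative_at[OF this, symmetric]
  show ?thesis by simp
qed

lemma Afield_sm: "smooth_on U X \<Longrightarrow> smooth_on U (\<lambda>q. A q (X q))"
  by (rule app_sm[OF A_smooth])

lemma Jfield_sm: "smooth_on U X \<Longrightarrow> smooth_on U (\<lambda>q. J q (X q))"
  by (rule app_sm[OF J_smooth])

lemma eta_nabla: "smooth_on U X \<Longrightarrow> q \<in> U \<Longrightarrow> nabla g X eta q = f q *\<^sub>R A q (X q)"
  using hypEta unfolding smooth_vf_def by blast

lemma Yf_deriv: assumes p: "p \<in> U" and X: "smooth_on U X" and Y: "smooth_on U Y"
  shows "frechet_derivative (\<lambda>q. frechet_derivative f (at q) (Y q)) (at p) (X p)
     = -4 * (g p (nabla g X (\<lambda>q. A q (Y q)) p) (eta p) + g p (A p (Y p)) (f p *\<^sub>R A p (X p)))"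
proof -
  have ee: "\<forall>q\<in>U. frechet_derivative f (at q) (Y q) = -4 * g q (A q (Y q)) (eta q)"
    using dderiv_f unfolding dderiv_def by blast
  have "frechet_derivative (\<lambda>q. frechet_derivative f (at q) (Y q)) (at p) (X p)
      = frechet_derivative (\<lambda>q. -4 * g q (A q (Y q)) (eta q)) (at p) (X p)"
    by (simp only: fd_cong[OF p ee])
  also have "\<dots> = -4 * frechet_derivative (\<lambda>q. g q (A q (Y q)) (eta q)) (at p) (X p)"
    by (rule fd_cmult[OF g_diffat[OF p Afield_sm[OF Y] eta_sm]])
  also have "\<dots> = -4 * (g p (nabla g X (\<lambda>q. A q (Y q)) p) (eta p) + g p (A p (Y p)) (nabla g X eta p))"
    using g_fd[OF p Afield_sm[OF Y] eta_sm] by simp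
  finally show ?thesis using eta_nabla[OF X p] by simp
qed

lemma d2f: assumes p: "p \<in> U" shows "dderiv w f differentiable (at p)"
proof -
  have wsm: "smooth_on U (\<lambda>q. A q w)" using A_smooth unfolding smooth_endo_def by blast
  have "(\<lambda>q. -4 * g q (A q w) (eta q)) differentiable (at p)"
    using g_diffat[OF p wsm eta_sm] by simp
  then obtain D where "((\<lambda>q. -4 * g q (A q w) (eta q)) has_derivative D) (at p)"
    unfolding differentiable_def by blast
  then have "(dderiv w f has_derivative D) (at p)"
    by (rule has_derivative_transform_within_open[OF _ U p]) (simp add: dderiv_f)
  then show ?thesis unfolding differentiable_def by blast
qed

lemma C_eq: assumes p: "p \<in> U" and X: "smooth_on U X" and Y: "smooth_on U Y"
  shows "nabla_endo g X A Y p - nabla_endo g Y A X p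
      = nabla g X (\<lambda>q. A q (Y q)) p - nabla g Y (\<lambda>q. A q (X q)) p - A p (lie X Y p)"
proof -
  have "A p (lie X Y p) = A p (nabla g X Y p) - A p (nabla g Y X p)"
    unfolding torsion[OF p, symmetric] by (rule linear_diff[OF A_lin[OF p]])
  then show ?thesis unfolding nabla_endo_def app_def by simp
qed

lemma claim1: assumes p: "p \<in> U" and X: "smooth_on U X" and Y: "smooth_on U Y"
  shows "g p (nabla_endo g X A Y p - nabla_endo g Y A X p) (eta p) = 0"
proof -
  have com: "frechet_derivative (\<lambda>q. frechet_derivative f (at q) (Y q)) (at p) (X p)
       - frechet_derivative (\<lambda>q. frechet_derivative f (at q) (X q)) (at p) (Y p)
       = frechet_derivative f (at p) (lie X Y p)"
    by (rule commutator[OF U p f_diff d2f[OF p] sm_diff[OF X p] sm_diff[OF Y p]])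
  have dl: "frechet_derivative f (at p) (lie X Y p) = -4 * g p (A p (lie X Y p)) (eta p)"
    using dderiv_f[OF p] unfolding dderiv_def by simp
  let ?P = "nabla g X (\<lambda>q. A q (Y q)) p" and ?Q = "nabla g Y (\<lambda>q. A q (X q)) p"
  have gl: "bilinear (g p)" by (rule g_bil[OF p])
  have "-4 * (g p ?P (eta p) + g p (A p (Y p)) (f p *\<^sub>R A p (X p)))
       - (-4 * (g p ?Q (eta p) + g p (A p (X p)) (f p *\<^sub>R A p (Y p)))) = -4 * g p (A p (lie X Y p)) (eta p)"
    using com unfolding Yf_deriv[OF p X Y] Yf_deriv[OF p Y X] dl .
  then have "g p ?P (eta p) - g p ?Q (eta p) - g p (A p (lie X Y p)) (eta p) = 0"
    using g_sym[OF p, of "A p (Y p)" "A p (X p)"] by (simp add: bilinear_rmul[OF gl] algebra_simps)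
  then show ?thesis unfolding C_eq[OF p X Y] by (simp add: bilinear_lsub[OF gl])
qed

lemma claim2: assumes p: "p \<in> U" and X: "smooth_on U X" and Y: "smooth_on U Y"
  shows "curv g X Y eta p = f p *\<^sub>R (nabla_endo g X A Y p - nabla_endo g Y A X p)
            - 4 *\<^sub>R contr (g p) (eta p) (A p (X p)) (A p (Y p))"
proof -
  have n1: "nabla g X (nabla g Y eta) p = (-4 * g p (A p (X p)) (eta p)) *\<^sub>R A p (Y p) + f p *\<^sub>R nabla g X (\<lambda>q. A q (Y q)) p"
  proof -
    have "nabla g X (nabla g Y eta) p = nabla g X (\<lambda>q. f q *\<^sub>R A q (Y q)) p"
      by (rule nabla_cong[OF p]) (simp add: eta_nabla[OF Y])
    also have "\<dots> = (-4 * g p (A p (X p)) (eta p)) *\<^sub>R A p (Y p) + f p *\<^sub>R nabla g X (\<lambda>q. A q (Y q)) p"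
      by (rule nabla_scale[OF p f_deriv[OF p] sm_hasd[OF Afield_sm[OF Y] p]])
    finally show ?thesis .
  qed
  have n2: "nabla g Y (nabla g X eta) p = (-4 * g p (A p (Y p)) (eta p)) *\<^sub>R A p (X p) + f p *\<^sub>R nabla g Y (\<lambda>q. A q (X q)) p"
  proof -
    have "nabla g Y (nabla g X eta) p = nabla g Y (\<lambda>q. f q *\<^sub>R A q (X q)) p"
      by (rule nabla_cong[OF p]) (simp add: eta_nabla[OF X])
    also have "\<dots> = (-4 * g p (A p (Y p)) (eta p)) *\<^sub>R A p (X p) + f p *\<^sub>R nabla g Y (\<lambda>q. A q (X q)) p"
      by (rule nabla_scale[OF p f_deriv[OF p] sm_hasd[OF Afield_sm[OF X] p]])
    finally show ?thesis .
  qed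
  have n3: "nabla g (lie X Y) eta p = f p *\<^sub>R A p (lie X Y p)"
    by (rule eta_nabla[OF smooth_lie[OF U X Y] p])
  show ?thesis unfolding curv_def n1 n2 n3 C_eq[OF p X Y] contr_def
    using g_sym[OF p, of "A p (X p)" "eta p"] g_sym[OF p, of "A p (Y p)" "eta p"]
    by (simp add: algebra_simps)
qed

lemma fd_works: "F differentiable (at p) \<Longrightarrow> (F has_derivative frechet_derivative F (at p)) (at p)"
  using frechet_derivative_works by blast

lemma nabla_diff_d: "p \<in> U \<Longrightarrow> V differentiable (at p) \<Longrightarrow> W differentiable (at p) \<Longrightarrow>
   nabla g X (\<lambda>q. V q - W q) p = nabla g X V p - nabla g X W p"
  by (rule nabla_diff[OF _ fd_works fd_works])

lemma nabla_minus_d: "p \<in> U \<Longrightarrow> V differentiable (at p) \<Longrightarrow> nabla g X (\<lambda>q. - V q) p = - nabla g X V p"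
  by (rule nabla_minus[OF _ fd_works])

lemma nabla_scale_d: "p \<in> U \<Longrightarrow> h differentiable (at p) \<Longrightarrow> V differentiable (at p) \<Longrightarrow>
   nabla g X (\<lambda>q. h q *\<^sub>R V q) p = frechet_derivative h (at p) (X p) *\<^sub>R V p + h p *\<^sub>R nabla g X V p"
  by (rule nabla_scale[OF _ fd_works fd_works])

lemma gJ0: "q \<in> U \<Longrightarrow> g q v (J q v) = 0"
proof -
  assume q: "q \<in> U"
  have "g q (J q v) (J q (J q v)) = g q v (J q v)" using J_orth q by blast
  moreover have "J q (J q v) = - v" using J_cplx q by blast
  ultimately have "- g q (J q v) v = g q v (J q v)" using bilinear_rneg[OF g_bil[OF q]] by simp
  then show ?thesis using g_sym[OF q, of "J q v" v] by simp
qed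

definition W where "W q v = - J q v - (k q * g q (eta q) v) *\<^sub>R J q (eta q) - (k q * g q (eta q) (J q v)) *\<^sub>R eta q"

lemma nabla_Jeta: assumes Z: "smooth_on U Z" and q: "q \<in> U"
  shows "nabla g Z (\<lambda>q. J q (eta q)) q = W q (A q (Z q))"
proof -
  let ?v = "A q (Z q)"
  have h: "nabla_endo g Z J eta q = (4 / (f q - 1)) *\<^sub>R (contr (g q) (eta q) (J q (eta q)) ?v
                               + contr (g q) (eta q) (eta q) (J q ?v))"
    using hypJ eta_smooth Z q unfolding smooth_vf_def by blast
  have "nabla g Z (\<lambda>q. J q (eta q)) q = nabla_endo g Z J eta q + J q (nabla g Z eta q)"
    unfolding nabla_endo_def app_def by simp
  also have "\<dots> = k q *\<^sub>R (contr (g q) (eta q) (J q (eta q)) ?v + contr (g q) (eta q) (eta q) (J q ?v))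
        + f q *\<^sub>R J q ?v"
    unfolding h eta_nabla[OF Z q] k_def[symmetric] using linear_cmul[OF J_lin[OF q]] by simp
  also have "\<dots> = (k q * s q + f q) *\<^sub>R J q ?v - (k q * g q (eta q) ?v) *\<^sub>R J q (eta q) - (k q * g q (eta q) (J q ?v)) *\<^sub>R eta q"
    unfolding contr_def s_def using gJ0[OF q, of "eta q"] by (simp add: algebra_simps)
  also have "\<dots> = W q ?v" unfolding W_def k_rel2[OF q] by simp
  finally show ?thesis .
qed

lemma nabla_JV: assumes p: "p \<in> U" and X: "smooth_on U X" and V: "smooth_on U V"
  shows "nabla g X (\<lambda>q. J q (V q)) p = k p *\<^sub>R (contr (g p) (V p) (J p (eta p)) (A p (X p))
                               + contr (g p) (V p) (eta p) (J p (A p (X p)))) + J p (nabla g X V p)"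
proof -
  have h: "nabla_endo g X J V p = (4 / (f p - 1)) *\<^sub>R (contr (g p) (V p) (J p (eta p)) (A p (X p))
                               + contr (g p) (V p) (eta p) (J p (A p (X p))))"
    using hypJ V X p unfolding smooth_vf_def by blast
  have "nabla g X (\<lambda>q. J q (V q)) p = nabla_endo g X J V p + J p (nabla g X V p)"
    unfolding nabla_endo_def app_def by simp
  then show ?thesis unfolding h k_def .
qed

lemma k_diff: "q \<in> U \<Longrightarrow> k differentiable (at q)"
  using k_deriv unfolding differentiable_def by blast

lemma phi_fd: assumes p: "p \<in> U" and X: "smooth_on U X" and V: "smooth_on U V"
  shows "frechet_derivative (\<lambda>q. k q * g q (eta q) (V q)) (at p) (X p)
     = (k p)\<^sup>2 * g p (A p (X p)) (eta p) * g p (eta p) (V p)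
       + k p * (g p (f p *\<^sub>R A p (X p)) (V p) + g p (eta p) (nabla g X V p))"
proof -
  have hd: "(\<lambda>q. g q (eta q) (V q)) differentiable (at p)" by (rule g_diffat[OF p eta_sm V])
  have "((\<lambda>q. k q * g q (eta q) (V q)) has_derivative
     (\<lambda>v. k p * frechet_derivative (\<lambda>q. g q (eta q) (V q)) (at p) v + (k p)\<^sup>2 * g p (A p v) (eta p) * g p (eta p) (V p))) (at p)"
    by (rule has_derivative_mult[OF k_deriv[OF p] fd_works[OF hd]])
  from frechet_derivative_at[OF this, symmetric]
  have "frechet_derivative (\<lambda>q. k q * g q (eta q) (V q)) (at p) (X p)
     = k p * frechet_derivative (\<lambda>q. g q (eta q) (V q)) (at p) (X p) + (k p)\<^sup>2 * g p (A p (X p)) (eta p) * g p (eta p) (V p)"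
    by simp
  also have "\<dots> = k p * (g p (nabla g X eta p) (V p) + g p (eta p) (nabla g X V p)) + (k p)\<^sup>2 * g p (A p (X p)) (eta p) * g p (eta p) (V p)"
    unfolding g_fd[OF p eta_sm V] ..
  finally show ?thesis unfolding eta_nabla[OF X p] by simp
qed

lemma NNJ: assumes p: "p \<in> U" and X: "smooth_on U X" and Y: "smooth_on U Y"
  shows "nabla g X (nabla g Y (\<lambda>q. J q (eta q))) p =
    - (k p *\<^sub>R (contr (g p) (A p (Y p)) (J p (eta p)) (A p (X p)) + contr (g p) (A p (Y p)) (eta p) (J p (A p (X p))))
       + J p (nabla g X (\<lambda>q. A q (Y q)) p))
    - (((k p)\<^sup>2 * g p (A p (X p)) (eta p) * g p (eta p) (A p (Y p))
          + k p * (g p (f p *\<^sub>R A p (X p)) (A p (Y p)) + g p (eta p) (nabla g X (\<lambda>q. A q (Y q)) p))) *\<^sub>R J p (eta p)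
       + (k p * g p (eta p) (A p (Y p))) *\<^sub>R W p (A p (X p)))
    - (((k p)\<^sup>2 * g p (A p (X p)) (eta p) * g p (eta p) (J p (A p (Y p)))
          + k p * (g p (f p *\<^sub>R A p (X p)) (J p (A p (Y p)))
             + g p (eta p) (k p *\<^sub>R (contr (g p) (A p (Y p)) (J p (eta p)) (A p (X p)) + contr (g p) (A p (Y p)) (eta p) (J p (A p (X p))))
       + J p (nabla g X (\<lambda>q. A q (Y q)) p)))) *\<^sub>R eta p
       + (k p * g p (eta p) (J p (A p (Y p)))) *\<^sub>R (f p *\<^sub>R A p (X p)))"
proof -
  define V where "V = (\<lambda>q. A q (Y q))"
  have Vs: "smooth_on U V" unfolding V_def by (rule Afield_sm[OF Y])
  have JVs: "smooth_on U (\<lambda>q. J q (V q))" by (rule Jfield_sm[OF Vs])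
  have Jes: "smooth_on U (\<lambda>q. J q (eta q))" by (rule Jfield_sm[OF eta_sm])
  have d1: "(\<lambda>q. k q * g q (eta q) (V q)) differentiable (at p)"
    by (rule differentiable_mult[OF k_diff[OF p] g_diffat[OF p eta_sm Vs]])
  have d2: "(\<lambda>q. k q * g q (eta q) (J q (V q))) differentiable (at p)"
    by (rule differentiable_mult[OF k_diff[OF p] g_diffat[OF p eta_sm JVs]])
  have dJV: "(\<lambda>q. J q (V q)) differentiable (at p)" by (rule sm_diff[OF JVs p])
  have dJe: "(\<lambda>q. J q (eta q)) differentiable (at p)" by (rule sm_diff[OF Jes p])
  have de: "eta differentiable (at p)" by (rule sm_diff[OF eta_sm p])
  have "nabla g X (nabla g Y (\<lambda>q. J q (eta q))) p = nabla g X (\<lambda>q. W q (V q)) p"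
    by (rule nabla_cong[OF p]) (simp add: nabla_Jeta[OF Y] V_def)
  also have "\<dots> = nabla g X (\<lambda>q. (- J q (V q) - (k q * g q (eta q) (V q)) *\<^sub>R J q (eta q))
                               - (k q * g q (eta q) (J q (V q))) *\<^sub>R eta q) p"
    unfolding W_def ..
  also have "\<dots> = nabla g X (\<lambda>q. - J q (V q) - (k q * g q (eta q) (V q)) *\<^sub>R J q (eta q)) p
                  - nabla g X (\<lambda>q. (k q * g q (eta q) (J q (V q))) *\<^sub>R eta q) p"
    by (rule nabla_diff_d[OF p differentiable_diff[OF differentiable_minus[OF dJV] differentiable_scaleR[OF d1 dJe]]
         differentiable_scaleR[OF d2 de]])
  also have "nabla g X (\<lambda>q. - J q (V q) - (k q * g q (eta q) (V q)) *\<^sub>R J q (eta q)) p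
     = - nabla g X (\<lambda>q. J q (V q)) p - nabla g X (\<lambda>q. (k q * g q (eta q) (V q)) *\<^sub>R J q (eta q)) p"
    using nabla_diff_d[OF p differentiable_minus[OF dJV] differentiable_scaleR[OF d1 dJe]]
      nabla_minus_d[OF p dJV] by simp
  also have "nabla g X (\<lambda>q. (k q * g q (eta q) (V q)) *\<^sub>R J q (eta q)) p
     = frechet_derivative (\<lambda>q. k q * g q (eta q) (V q)) (at p) (X p) *\<^sub>R J p (eta p)
       + (k p * g p (eta p) (V p)) *\<^sub>R W p (A p (X p))"
    using nabla_scale_d[OF p d1 dJe] nabla_Jeta[OF X p] by simp
  also have "nabla g X (\<lambda>q. (k q * g q (eta q) (J q (V q))) *\<^sub>R eta q) p
     = frechet_derivative (\<lambda>q. k q * g q (eta q) (J q (V q))) (at p) (X p) *\<^sub>R eta p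
       + (k p * g p (eta p) (J p (V p))) *\<^sub>R (f p *\<^sub>R A p (X p))"
    using nabla_scale_d[OF p d2 de] eta_nabla[OF X p] by simp
  finally show ?thesis
    unfolding phi_fd[OF p X Vs] phi_fd[OF p X JVs] nabla_JV[OF p X Vs] unfolding V_def .
qed

lemma claim3: assumes p: "p \<in> U" and X: "smooth_on U X" and Y: "smooth_on U Y"
  shows "curv g X Y (app J eta) p =
          - J p (nabla_endo g X A Y p - nabla_endo g Y A X p)
          + (4 / (f p - 1) * g p (nabla_endo g X A Y p - nabla_endo g Y A X p) (J p (eta p))) *\<^sub>R eta p
          - 4 *\<^sub>R contr (g p) (J p (eta p)) (A p (X p)) (A p (Y p))"
proof -
  let ?C = "nabla_endo g X A Y p - nabla_endo g Y A X p"
  let ?P = "nabla g X (\<lambda>q. A q (Y q)) p" and ?Q = "nabla g Y (\<lambda>q. A q (X q)) p"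
  have AL: "A p (lie X Y p) = ?P - ?Q - ?C" using C_eq[OF p X Y] by simp
  have n3: "nabla g (lie X Y) (\<lambda>q. J q (eta q)) p = W p (?P - ?Q - ?C)"
    using nabla_Jeta[OF smooth_lie[OF U X Y] p] AL by simp
  have cv: "curv g X Y (app J eta) p = nabla g X (nabla g Y (\<lambda>q. J q (eta q))) p
      - nabla g Y (nabla g X (\<lambda>q. J q (eta q))) p - W p (?P - ?Q - ?C)"
    unfolding curv_def app_def[abs_def] using n3 by simp
  have Ce: "g p ?C (eta p) = 0" by (rule claim1[OF p X Y])
  have "curv g X Y (app J eta) p = - J p ?C + (k p * g p ?C (J p (eta p))) *\<^sub>R eta p
          - 4 *\<^sub>R contr (g p) (J p (eta p)) (A p (X p)) (A p (Y p))"
    unfolding cv NNJ[OF p X Y] NNJ[OF p Y X]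
    apply (rule final_alg[where G="g p" and Jm="J p" and k="k p" and f="f p" and e="eta p"
       and T="\<lambda>a v. k p *\<^sub>R (contr (g p) v (J p (eta p)) a + contr (g p) v (eta p) (J p a))" and W="W p"])
    subgoal by (rule g_bil[OF p])
    subgoal by (rule g_sym[OF p])
    subgoal by (rule J_lin[OF p])
    subgoal using J_cplx p by blast
    subgoal using J_orth p by blast
    subgoal by (rule k_rel1[OF p])
    subgoal using k_rel2[OF p] unfolding s_def .
    subgoal by (rule Ce)
    subgoal by simp
    subgoal by (simp add: W_def)
    by (rule refl)+
  then show ?thesis unfolding k_def .
qed

end

theorem lemma5p2:
  fixes U :: "'a::euclidean_space set"
    and g :: "'a \<Rightarrow> 'a \<Rightarrow> 'a \<Rightarrow> real"
    and J A :: "'a \<Rightarrow> 'a \<Rightarrow> 'a"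
    and eta :: "'a \<Rightarrow> 'a"
  defines "rho \<equiv> (\<lambda>p. sqrt (g p (eta p) (eta p)))"
  defines "f \<equiv> (\<lambda>p. sqrt (1 - 4 * (rho p)\<^sup>2))"
  defines "C \<equiv> (\<lambda>X Y p. nabla_endo g X A Y p - nabla_endo g Y A X p)"
  assumes dim: "DIM('a) = 4"
    and U: "open U"
    and metric: "riemannian_metric U g"
    and J_smooth: "smooth_endo U J"
    and J_cplx: "\<forall>p\<in>U. \<forall>v. J p (J p v) = - v"
    and J_orth: "\<forall>p\<in>U. \<forall>u v. g p (J p u) (J p v) = g p u v"
    and A_smooth: "smooth_endo U A"
    and A_skew: "\<forall>p\<in>U. \<forall>u v. g p (A p u) v = - g p u (A p v)"
    and eta_smooth: "smooth_vf U eta"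
    and rho_bounds: "\<forall>p\<in>U. 0 < rho p \<and> rho p < 1/2"
    and hypJ: "\<forall>X Y. smooth_vf U X \<longrightarrow> smooth_vf U Y \<longrightarrow> (\<forall>p\<in>U.
        nabla_endo g Y J X p =
          (4 / (f p - 1)) *\<^sub>R (contr (g p) (X p) (J p (eta p)) (A p (Y p))
                               + contr (g p) (X p) (eta p) (J p (A p (Y p)))))"
    and hypEta: "\<forall>X. smooth_vf U X \<longrightarrow> (\<forall>p\<in>U. nabla g X eta p = f p *\<^sub>R A p (X p))"
  shows "\<forall>X Y. smooth_vf U X \<longrightarrow> smooth_vf U Y \<longrightarrow> (\<forall>p\<in>U.
        g p (C X Y p) (eta p) = 0
      \<and> curv g X Y eta p = f p *\<^sub>R C X Y p - 4 *\<^sub>R contr (g p) (eta p) (A p (X p)) (A p (Y p))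
      \<and> curv g X Y (app J eta) p =
          - J p (C X Y p) + (4 / (f p - 1) * g p (C X Y p) (J p (eta p))) *\<^sub>R eta p
          - 4 *\<^sub>R contr (g p) (J p (eta p)) (A p (X p)) (A p (Y p)))"
proof -
  interpret L: L5 U g J A eta f
  proof (unfold_locales)
    show "open U" by (rule U)
    show "riemannian_metric U g" by (rule metric)
    show "f = (\<lambda>p. sqrt (1 - 4 * (sqrt (g p (eta p) (eta p)))\<^sup>2))" unfolding f_def rho_def ..
    show "smooth_endo U J" by (rule J_smooth)
    show "\<forall>p\<in>U. \<forall>v. J p (J p v) = - v" by (rule J_cplx)
    show "\<forall>p\<in>U. \<forall>u v. g p (J p u) (J p v) = g p u v" by (rule J_orth)
    show "smooth_endo U A" by (rule A_smooth)
    show "smooth_vf U eta" by (rule eta_smooth)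
    show "\<forall>p\<in>U. 0 < sqrt (g p (eta p) (eta p)) \<and> sqrt (g p (eta p) (eta p)) < 1/2"
      using rho_bounds unfolding rho_def .
    show "\<forall>X Y. smooth_vf U X \<longrightarrow> smooth_vf U Y \<longrightarrow> (\<forall>p\<in>U.
        nabla_endo g Y J X p =
          (4 / (f p - 1)) *\<^sub>R (contr (g p) (X p) (J p (eta p)) (A p (Y p))
                               + contr (g p) (X p) (eta p) (J p (A p (Y p)))))" by (rule hypJ)
    show "\<forall>X. smooth_vf U X \<longrightarrow> (\<forall>p\<in>U. nabla g X eta p = f p *\<^sub>R A p (X p))" by (rule hypEta)
  qed
  show ?thesis
  proof (intro allI impI ballI)
    fix X Y p assume X: "smooth_vf U X" and Y: "smooth_vf U Y" and p: "p \<in> U"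
    have Xs: "smooth_on U X" and Ys: "smooth_on U Y" using X Y unfolding smooth_vf_def by auto
    have Ceq: "C X Y p = nabla_endo g X A Y p - nabla_endo g Y A X p" unfolding C_def ..
    show "g p (C X Y p) (eta p) = 0
      \<and> curv g X Y eta p = f p *\<^sub>R C X Y p - 4 *\<^sub>R contr (g p) (eta p) (A p (X p)) (A p (Y p))
      \<and> curv g X Y (app J eta) p =
          - J p (C X Y p) + (4 / (f p - 1) * g p (C X Y p) (J p (eta p))) *\<^sub>R eta p
          - 4 *\<^sub>R contr (g p) (J p (eta p)) (A p (X p)) (A p (Y p))"
      unfolding Ceq using L.claim1[OF p Xs Ys] L.claim2[OF p Xs Ys] L.claim3[OF p Xs Ys] by simp
  qed
qed

end
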